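(* Let $K\subseteq\mathbb{R}^{p}$ be compact, $S_0$ a set of covariate values, $\sigma>0$, and $r(x,\beta)$ a function such that for every $x$, $\beta\mapsto r(x,\beta)$ is a polynomial of degree at most $\zeta$ (an integer $\ge1$). Assume $\mathfrak{L}_{S_0}:=\sup_{x\in S_0}\mathfrak{L}(x)$ is finite and positive. Then there is a constant $C_p$ depending only on $p$ such that for every $0<\eta<e^{-1}\sigma^{-1}$, $$\log N(\eta,\mathcal{M}_K,\|\cdot\|_{\infty,S_0\times\mathbb{R}})\le C_p\,\zeta^p\,N\Big(\frac{\sigma}{\mathfrak{L}_{S_0}}\sqrt{2\log\frac{3}{\sigma\eta}},\,K\Big)\Big(\log\frac{1}{\sigma\eta}\Big)^{p+1}.$$
   Context: $\phi$ is the standard normal density; for a probability measure $G$ on $\mathbb{R}^p$, $f^G_x(y):=\int\frac1\sigma\phi\big(\frac{y-r(x,\beta)}{\sigma}\big)\,dG(\beta)$. $\mathcal{M}_K:=\{(x,y)\mapsto f^G_x(y): G\text{ a probability measure supported on }K\}$. $\|\cdot\|_{\infty,S_0\times\mathbb{R}}$ is the pseudometric $(f^G,f^{G'})\mapsto\sup_{x\in S_0,y\in\mathbb{R}}|f^G_x(y)-f^{G'}_x(y)|$. $\mathfrak{L}(x):=\sup_{\beta_1,\beta_2\in K,\beta_1\ne\beta_2}\frac{|r(x,\beta_1)-r(x,\beta_2)|}{\|\beta_1-\beta_2\|}$. For a metric (pseudometric) $\mathfrak{d}$, $N(\eta,T,\mathfrak{d})$ is the smallest cardinality of a set $S$ with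 $\sup_{t\in T}\inf_{s\in S}\mathfrak{d}(s,t)\le\eta$; $N(\eta,T)$ denotes this for the Euclidean metric. *)

theory Defs
  imports "HOL-Probability.Probability"
begin

text \<open>Covering number N(eta, T, d): smallest cardinality of a set S (of points of the ambient
  type) with sup over t in T of inf over s in S of d(s,t) at most eta; infinity if no finite such S.\<close>
definition covering_number :: "('a \<Rightarrow> 'a \<Rightarrow> ereal) \<Rightarrow> real \<Rightarrow> 'a set \<Rightarrow> ereal" where
  "covering_number d eta T =
     (INF S \<in> {S. finite S \<and> (\<forall>t\<in>T. \<exists>s\<in>S. d s t \<le> ereal eta)}. ereal (real (card S)))"

text \<open>Sup pseudometric over S0 x R (values in ereal so that unbounded differences give infinity).\<close>
definition sup_dist :: "'x set \<Rightarrow> ('x \<Rightarrow> real \<Rightarrow> real) \<Rightarrow> ('x \<Rightarrow> real \<Rightarrow> real) \<Rightarrow> ereal" where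
  "sup_dist S0 f g = (SUP xy \<in> S0 \<times> (UNIV::real set). ereal \<bar>f (fst xy) (snd xy) - g (fst xy) (snd xy)\<bar>)"

definition mix_density :: "real \<Rightarrow> ('x \<Rightarrow> real^'p \<Rightarrow> real) \<Rightarrow> (real^'p) measure \<Rightarrow> 'x \<Rightarrow> real \<Rightarrow> real" where
  "mix_density \<sigma> r G x y = (\<integral>\<beta>. (1 / \<sigma>) * std_normal_density ((y - r x \<beta>) / \<sigma>) \<partial>G)"

definition mixture_class :: "real \<Rightarrow> ('x \<Rightarrow> real^'p \<Rightarrow> real) \<Rightarrow> (real^'p) set \<Rightarrow> ('x \<Rightarrow> real \<Rightarrow> real) set" where
  "mixture_class \<sigma> r K =
     {mix_density \<sigma> r G | G. prob_space G \<and> sets G = sets borel \<and> emeasure G K = 1}"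

definition lip_const :: "('x \<Rightarrow> real^'p \<Rightarrow> real) \<Rightarrow> (real^'p) set \<Rightarrow> 'x \<Rightarrow> ereal" where
  "lip_const r K x = (SUP b \<in> {(b1, b2). b1 \<in> K \<and> b2 \<in> K \<and> b1 \<noteq> b2}.
       ereal (\<bar>r x (fst b) - r x (snd b)\<bar> / norm (fst b - snd b)))"

definition poly_deg_le :: "nat \<Rightarrow> (real^'p \<Rightarrow> real) \<Rightarrow> bool" where
  "poly_deg_le d f \<longleftrightarrow> (\<exists>c :: ('p \<Rightarrow> nat) \<Rightarrow> real. \<forall>\<beta>.
      f \<beta> = (\<Sum>\<alpha> \<in> {\<alpha>. (\<Sum>i\<in>UNIV. \<alpha> i) \<le> d}. c \<alpha> * (\<Prod>i\<in>UNIV. (\<beta> $ i) ^ (\<alpha> i))))"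

end

theory Submission
  imports Defs
begin

lemma sq2pi: "1 \<le> sqrt (2 * pi)"
  using pi_gt3 by (simp add: real_sqrt_ge_one)

lemma h_nonneg: "0 \<le> std_normal_density u"
  by (simp add: std_normal_density_def)

lemma h_le_exp: "std_normal_density u \<le> exp (- u\<^sup>2 / 2)"
proof -
  have "exp (- u\<^sup>2 / 2) / sqrt (2 * pi) \<le> exp (- u\<^sup>2 / 2) / 1"
    using sq2pi by (intro divide_left_mono) auto
  then show ?thesis unfolding std_normal_density_def by simp
qed

lemma h_le_1: "std_normal_density u \<le> 1"
proof -
  have "exp (- u\<^sup>2 / 2) \<le> 1" by simp
  then show ?thesis using h_le_exp[of u] by linarith
qed

lemma abs_mul_exp_le: "\<bar>u\<bar> * exp (- u\<^sup>2 / 2) \<le> (1::real)"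
proof -
  have "0 \<le> (\<bar>u\<bar> - 1)\<^sup>2" by simp
  then have "\<bar>u\<bar> \<le> 1 + u\<^sup>2/2"
    by (simp add: power2_diff power2_abs)
  also have "\<dots> \<le> exp (u\<^sup>2/2)" using exp_ge_add_one_self by simp
  finally have "\<bar>u\<bar> \<le> exp (u\<^sup>2/2)" .
  then show ?thesis by (simp add: exp_minus field_simps)
qed

lemma h_deriv: "(std_normal_density has_real_derivative
   (1 / sqrt (2 * pi)) * (exp (- u\<^sup>2 / 2) * (- u))) (at u)"
  unfolding std_normal_density_def
  apply (rule derivative_eq_intros refl | simp)+
  done


lemma h_lip: "\<bar>std_normal_density u - std_normal_density v\<bar> \<le> \<bar>u - v\<bar>"
proof -
  have bd: "\<bar>(1 / sqrt (2 * pi)) * (exp (- w\<^sup>2 / 2) * (- w))\<bar> \<le> 1" for w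
  proof -
    have "\<bar>exp (- w\<^sup>2 / 2) * (- w)\<bar> \<le> 1" using abs_mul_exp_le[of w] by (simp add: abs_mult mult.commute)
    moreover have "\<bar>1 / sqrt (2 * pi)\<bar> \<le> 1" using sq2pi by (simp add: divide_le_eq)
    ultimately show ?thesis unfolding abs_mult by (metis abs_ge_zero mult_le_one mult_nonneg_nonneg abs_mult)
  qed
  have *: "\<bar>std_normal_density b - std_normal_density a\<bar> \<le> b - a" if "a < b" for a b
  proof -
    have "\<exists>z>a. z < b \<and> std_normal_density b - std_normal_density a = (b - a) * ((1 / sqrt (2 * pi)) * (exp (- z\<^sup>2 / 2) * (- z)))"
      by (rule MVT2[OF that]) (use h_deriv in auto)
    then obtain z where eq: "std_normal_density b - std_normal_density a = (b - a) * ((1 / sqrt (2 * pi)) * (exp (- z\<^sup>2 / 2) * (- z)))"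
      by blast
    have "\<bar>(b - a) * ((1 / sqrt (2 * pi)) * (exp (- z\<^sup>2 / 2) * (- z)))\<bar> \<le> (b - a) * 1"
      unfolding abs_mult using bd[of z] that by (intro mult_mono) auto
    then show ?thesis unfolding eq by simp
  qed
  show ?thesis
    by (cases u v rule: linorder_cases) (use *[of u v] *[of v u] in \<open>auto simp: abs_minus_commute\<close>)
qed

lemma pow_fact_le_exp: "0 \<le> x \<Longrightarrow> x ^ k / fact k \<le> exp (x::real)"
proof -
  assume x: "0 \<le> x"
  have "summable (\<lambda>n. x ^ n / fact n)" using summable_exp[of x] by (simp add: divide_inverse mult.commute)
  then have "(\<Sum>n\<in>{k}. x ^ n / fact n) \<le> (\<Sum>n. x ^ n / fact n)"
    by (rule sum_le_suminf) (use x in auto)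
  also have "(\<Sum>n. x ^ n / fact n) = exp x" by (simp add: exp_def scaleR_conv_of_real divide_inverse mult.commute)
  finally show ?thesis by simp
qed

lemma exp_taylor_neg:
  fixes t :: real and k :: nat
  assumes "0 \<le> t"
  shows "\<bar>exp (- t) - (\<Sum>m<k. (- t) ^ m / fact m)\<bar> \<le> exp (4 * t - real k)"
proof -
  obtain s where s: "\<bar>s\<bar> \<le> \<bar>-t\<bar>" and eq: "exp (-t) = (\<Sum>m<k. (- t) ^ m / fact m) + (exp s / fact k) * (-t) ^ k"
    using Maclaurin_exp_le[of "-t" k] by blast
  have "\<bar>exp (- t) - (\<Sum>m<k. (- t) ^ m / fact m)\<bar> = exp s * (t ^ k / fact k)"
    unfolding eq using assms by (simp add: abs_mult power_abs)
  also have "\<dots> \<le> exp t * (t ^ k / fact k)"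
    using s assms by (intro mult_right_mono) auto
  also have "t ^ k / fact k = ((exp 1 * t) ^ k / fact k) / exp (real k)"
    by (simp add: power_mult_distrib exp_of_nat_mult[symmetric])
  also have "exp t * (((exp 1 * t) ^ k / fact k) / exp (real k)) \<le> exp t * (exp (exp 1 * t) / exp (real k))"
    using pow_fact_le_exp[of "exp 1 * t" k] assms
    by (intro mult_left_mono divide_right_mono) auto
  also have "\<dots> = exp (t + exp 1 * t - real k)" by (simp add: exp_add exp_diff)
  also have "\<dots> \<le> exp (4 * t - real k)"
  proof -
    have "exp 1 * t \<le> 3 * t" using exp_le assms by (intro mult_right_mono) auto
    then show ?thesis by simp
  qed
  finally show ?thesis .
qed

definition mono :: "('p::finite \<Rightarrow> nat) \<Rightarrow> real^'p \<Rightarrow> real" where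
  "mono \<alpha> \<beta> = (\<Prod>i\<in>UNIV. (\<beta> $ i) ^ (\<alpha> i))"

definition Idx :: "nat \<Rightarrow> ('p::finite \<Rightarrow> nat) set" where
  "Idx d = {\<alpha>. (\<Sum>i\<in>UNIV. \<alpha> i) \<le> d}"

lemma Idx_sub: "Idx d \<subseteq> Pi\<^sub>E (UNIV::'p::finite set) (\<lambda>_. {..d})"
proof
  fix \<alpha> :: "'p \<Rightarrow> nat" assume "\<alpha> \<in> Idx d"
  then have "(\<Sum>i\<in>UNIV. \<alpha> i) \<le> d" by (simp add: Idx_def)
  moreover have "\<alpha> i \<le> (\<Sum>i\<in>UNIV. \<alpha> i)" for i by (rule member_le_sum) auto
  ultimately show "\<alpha> \<in> Pi\<^sub>E UNIV (\<lambda>_. {..d})" by (auto simp: PiE_def Pi_def extensional_def intro: le_trans)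
qed

lemma finite_Idx: "finite (Idx d :: ('p::finite \<Rightarrow> nat) set)"
  by (rule finite_subset[OF Idx_sub]) (auto intro: finite_PiE)

lemma card_Idx: "card (Idx d :: ('p::finite \<Rightarrow> nat) set) \<le> (d + 1) ^ CARD('p)"
proof -
  have "card (Idx d :: ('p \<Rightarrow> nat) set) \<le> card (Pi\<^sub>E (UNIV::'p set) (\<lambda>_. {..d}))"
    by (rule card_mono[OF _ Idx_sub]) (auto intro: finite_PiE)
  also have "\<dots> = (d + 1) ^ CARD('p)" by (simp add: card_PiE)
  finally show ?thesis .
qed

lemma zero_Idx: "(\<lambda>_. 0) \<in> Idx d" by (simp add: Idx_def)

lemma mono_zero[simp]: "mono (\<lambda>_. 0) \<beta> = 1" by (simp add: mono_def)

lemma Idx_mono: "d \<le> d' \<Longrightarrow> Idx d \<subseteq> Idx d'" by (auto simp: Idx_def)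

lemma mono_add: "mono (\<lambda>i. \<alpha> i + \<alpha>' i) \<beta> = mono \<alpha> \<beta> * mono \<alpha>' \<beta>"
  by (simp add: mono_def power_add prod.distrib)

lemma continuous_mono: "continuous_on S (mono \<alpha>)"
  unfolding mono_def by (intro continuous_intros)

lemma poly_iff: "poly_deg_le d f \<longleftrightarrow> (\<exists>c. \<forall>\<beta>. f \<beta> = (\<Sum>\<alpha>\<in>Idx d. c \<alpha> * mono \<alpha> \<beta>))"
  by (simp add: poly_deg_le_def Idx_def mono_def)

lemma poly_le: assumes "poly_deg_le d f" "d \<le> d'" shows "poly_deg_le d' f"
proof -
  obtain c where c: "\<And>\<beta>. f \<beta> = (\<Sum>\<alpha>\<in>Idx d. c \<alpha> * mono \<alpha> \<beta>)" using assms(1) by (auto simp: poly_iff)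
  define c' where "c' \<alpha> = (if \<alpha> \<in> Idx d then c \<alpha> else 0)" for \<alpha>
  have "f \<beta> = (\<Sum>\<alpha>\<in>Idx d'. c' \<alpha> * mono \<alpha> \<beta>)" for \<beta>
  proof -
    have "(\<Sum>\<alpha>\<in>Idx d'. c' \<alpha> * mono \<alpha> \<beta>) = (\<Sum>\<alpha>\<in>Idx d. c' \<alpha> * mono \<alpha> \<beta>)"
      by (rule sum.mono_neutral_right) (use Idx_mono[OF assms(2)] finite_Idx in \<open>auto simp: c'_def\<close>)
    then show ?thesis by (simp add: c c'_def)
  qed
  then show ?thesis by (auto simp: poly_iff)
qed

lemma poly_const: "poly_deg_le d (\<lambda>_::real^'p::finite. a)"
proof -
  have "(\<Sum>\<alpha>\<in>Idx d. (if \<alpha> = (\<lambda>_. 0) then a else 0) * mono \<alpha> \<beta>) = a" for \<beta> :: "real^'p"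
  proof -
    have "(\<Sum>\<alpha>\<in>Idx d. (if \<alpha> = (\<lambda>_. 0) then a else 0) * mono \<alpha> \<beta>) = (\<Sum>\<alpha>\<in>Idx d. if \<alpha> = (\<lambda>_. 0) then a * mono \<alpha> \<beta> else 0)"
      by (rule sum.cong) auto
    also have "\<dots> = a" by (subst sum.delta) (auto simp: finite_Idx zero_Idx)
    finally show ?thesis .
  qed
  then show ?thesis unfolding poly_iff by (intro exI[of _ "\<lambda>\<alpha>. if \<alpha> = (\<lambda>_. 0) then a else 0"]) auto
qed

lemma poly_add: assumes "poly_deg_le d f" "poly_deg_le d g" shows "poly_deg_le d (\<lambda>\<beta>. f \<beta> + g \<beta>)"
proof -
  obtain c where c: "\<And>\<beta>. f \<beta> = (\<Sum>\<alpha>\<in>Idx d. c \<alpha> * mono \<alpha> \<beta>)" using assms(1) by (auto simp: poly_iff)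
  obtain c' where c': "\<And>\<beta>. g \<beta> = (\<Sum>\<alpha>\<in>Idx d. c' \<alpha> * mono \<alpha> \<beta>)" using assms(2) by (auto simp: poly_iff)
  show ?thesis unfolding poly_iff
    by (rule exI[of _ "\<lambda>\<alpha>. c \<alpha> + c' \<alpha>"]) (simp add: c c' sum.distrib distrib_right)
qed

lemma poly_scale: assumes "poly_deg_le d f" shows "poly_deg_le d (\<lambda>\<beta>. a * f \<beta>)"
proof -
  obtain c where c: "\<And>\<beta>. f \<beta> = (\<Sum>\<alpha>\<in>Idx d. c \<alpha> * mono \<alpha> \<beta>)" using assms(1) by (auto simp: poly_iff)
  show ?thesis unfolding poly_iff
    by (rule exI[of _ "\<lambda>\<alpha>. a * c \<alpha>"]) (simp add: c sum_distrib_left mult.assoc)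
qed

lemma poly_mult: assumes "poly_deg_le a f" "poly_deg_le b g" shows "poly_deg_le (a + b) (\<lambda>\<beta>. f \<beta> * g \<beta>)"
proof -
  obtain c where c: "\<And>\<beta>. f \<beta> = (\<Sum>\<alpha>\<in>Idx a. c \<alpha> * mono \<alpha> \<beta>)" using assms(1) by (auto simp: poly_iff)
  obtain c' where c': "\<And>\<beta>. g \<beta> = (\<Sum>\<alpha>\<in>Idx b. c' \<alpha> * mono \<alpha> \<beta>)" using assms(2) by (auto simp: poly_iff)
  define s where "s p = (\<lambda>i. fst p i + snd p i)" for p :: "('a \<Rightarrow> nat) \<times> ('a \<Rightarrow> nat)"
  define e where "e \<gamma> = (\<Sum>p\<in>{p. p \<in> Idx a \<times> Idx b \<and> s p = \<gamma>}. c (fst p) * c' (snd p))" for \<gamma>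
  have sub: "s ` (Idx a \<times> Idx b) \<subseteq> Idx (a + b)"
    by (auto simp: s_def Idx_def sum.distrib)
  have "f \<beta> * g \<beta> = (\<Sum>\<gamma>\<in>Idx (a+b). e \<gamma> * mono \<gamma> \<beta>)" for \<beta>
  proof -
    have "f \<beta> * g \<beta> = (\<Sum>\<alpha>\<in>Idx a. \<Sum>\<alpha>'\<in>Idx b. (c \<alpha> * mono \<alpha> \<beta>) * (c' \<alpha>' * mono \<alpha>' \<beta>))"
      by (simp add: c c' sum_product)
    also have "\<dots> = (\<Sum>(\<alpha>,\<alpha>')\<in>Idx a \<times> Idx b. (c \<alpha> * mono \<alpha> \<beta>) * (c' \<alpha>' * mono \<alpha>' \<beta>))"
      by (rule sum.cartesian_product)
    also have "\<dots> = (\<Sum>p\<in>Idx a \<times> Idx b. c (fst p) * c' (snd p) * mono (s p) \<beta>)"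
      by (rule sum.cong) (auto simp: s_def mono_add)
    also have "\<dots> = (\<Sum>\<gamma>\<in>Idx (a+b). \<Sum>p\<in>{p. p \<in> Idx a \<times> Idx b \<and> s p = \<gamma>}. c (fst p) * c' (snd p) * mono (s p) \<beta>)"
      by (rule sum.group[symmetric]) (auto simp: finite_Idx sub)
    also have "\<dots> = (\<Sum>\<gamma>\<in>Idx (a+b). e \<gamma> * mono \<gamma> \<beta>)"
      unfolding e_def sum_distrib_right by (intro sum.cong refl) auto
    finally show ?thesis .
  qed
  then show ?thesis unfolding poly_iff by blast
qed

lemma poly_pow: assumes "poly_deg_le d f" shows "poly_deg_le (d * m) (\<lambda>\<beta>. f \<beta> ^ m)"
proof (induction m)
  case 0 then show ?case by (simp add: poly_const)
next
  case (Suc m)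
  have "poly_deg_le (d + d * m) (\<lambda>\<beta>. f \<beta> * f \<beta> ^ m)" by (rule poly_mult[OF assms Suc])
  then show ?case by (simp add: algebra_simps)
qed

lemma poly_sum: assumes "finite A" "\<And>i. i \<in> A \<Longrightarrow> poly_deg_le d (f i)"
  shows "poly_deg_le d (\<lambda>\<beta>. \<Sum>i\<in>A. f i \<beta>)"
  using assms by (induction A rule: finite_induct) (auto simp: poly_const intro!: poly_add)

lemma continuous_poly: assumes "poly_deg_le d f" shows "continuous_on S f"
proof -
  obtain c where c: "\<And>\<beta>. f \<beta> = (\<Sum>\<alpha>\<in>Idx d. c \<alpha> * mono \<alpha> \<beta>)" using assms(1) by (auto simp: poly_iff)
  have "f = (\<lambda>\<beta>. \<Sum>\<alpha>\<in>Idx d. c \<alpha> * mono \<alpha> \<beta>)" using c by auto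
  then show ?thesis by (simp add: continuous_intros mono_def)
qed

lemma lin_dep:
  fixes V :: "'i \<Rightarrow> 'a \<Rightarrow> real"
  assumes "finite I" "finite F" "card F > card I"
  shows "\<exists>c. (\<exists>i\<in>F. c i \<noteq> 0) \<and> (\<forall>\<alpha>\<in>I. (\<Sum>i\<in>F. c i * V i \<alpha>) = 0)"
  using assms
proof (induction I arbitrary: F V rule: finite_induct)
  case empty
  then have "F \<noteq> {}" by auto
  then show ?case by (intro exI[of _ "\<lambda>_. 1"]) auto
next
  case (insert a I)
  show ?case
  proof (cases "\<forall>i\<in>F. V i a = 0")
    case True
    have "card F > card I" using insert by auto
    then obtain c where c: "\<exists>i\<in>F. c i \<noteq> 0" "\<forall>\<alpha>\<in>I. (\<Sum>i\<in>F. c i * V i \<alpha>) = 0"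
      using insert.IH[of F V] insert.prems by blast
    show ?thesis using c True by (intro exI[of _ c]) auto
  next
    case False
    then obtain k where k: "k \<in> F" "V k a \<noteq> 0" by blast
    define F' where "F' = F - {k}"
    define W where "W i \<alpha> = V i \<alpha> - (V i a / V k a) * V k \<alpha>" for i \<alpha>
    have fF': "finite F'" using insert.prems by (simp add: F'_def)
    have "card F' = card F - 1" using k insert.prems by (simp add: F'_def)
    then have "card F' > card I" using insert by auto
    then obtain c' where c': "\<exists>i\<in>F'. c' i \<noteq> 0" "\<forall>\<alpha>\<in>I. (\<Sum>i\<in>F'. c' i * W i \<alpha>) = 0"
      using insert.IH[of F' W] fF' by blast
    define c where "c i = (if i = k then - (\<Sum>j\<in>F'. c' j * V j a) / V k a else c' i)" for i
    have split: "(\<Sum>i\<in>F. c i * V i \<alpha>) = c k * V k \<alpha> + (\<Sum>i\<in>F'. c' i * V i \<alpha>)" for \<alpha>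
    proof -
      have "F = insert k F'" using k by (auto simp: F'_def)
      have "(\<Sum>i\<in>F. c i * V i \<alpha>) = c k * V k \<alpha> + (\<Sum>i\<in>F'. c i * V i \<alpha>)"
        unfolding F'_def by (rule sum.remove[OF insert.prems(1) k(1)])
      also have "(\<Sum>i\<in>F'. c i * V i \<alpha>) = (\<Sum>i\<in>F'. c' i * V i \<alpha>)"
        by (rule sum.cong) (auto simp: c_def F'_def)
      finally show ?thesis .
    qed
    have eqW: "(\<Sum>i\<in>F. c i * V i \<alpha>) = (\<Sum>i\<in>F'. c' i * W i \<alpha>)" for \<alpha>
    proof -
      have e1: "c' i * W i \<alpha> = c' i * V i \<alpha> - (c' i * V i a) * (V k \<alpha> / V k a)" for i
        using k(2) by (simp add: W_def field_simps)
      have "(\<Sum>i\<in>F'. c' i * W i \<alpha>) = (\<Sum>i\<in>F'. c' i * V i \<alpha>) - (\<Sum>i\<in>F'. c' i * V i a) * (V k \<alpha> / V k a)"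
        unfolding e1 sum_subtractf sum_distrib_right[symmetric] by simp
      then show ?thesis unfolding split by (simp add: c_def)
    qed
    have "(\<Sum>i\<in>F. c i * V i \<alpha>) = 0" if "\<alpha> \<in> insert a I" for \<alpha>
    proof (cases "\<alpha> = a")
      case True
      have "W i a = 0" for i using k by (simp add: W_def)
      then show ?thesis unfolding eqW True by simp
    next
      case False
      then show ?thesis unfolding eqW using c' that by auto
    qed
    moreover have "\<exists>i\<in>F. c i \<noteq> 0" using c' by (auto simp: c_def F'_def)
    ultimately show ?thesis by blast
  qed
qed

lemma cone_reduce:
  fixes V :: "'i \<Rightarrow> 'a \<Rightarrow> real"
  assumes "finite I" "finite F" "\<forall>i\<in>F. 0 \<le> w i"
  shows "\<exists>F' w'. F' \<subseteq> F \<and> card F' \<le> card I \<and> (\<forall>i\<in>F'. 0 \<le> w' i) \<and>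
     (\<forall>\<alpha>\<in>I. (\<Sum>i\<in>F'. w' i * V i \<alpha>) = (\<Sum>i\<in>F. w i * V i \<alpha>))"
  using assms(2,3)
proof (induction "card F" arbitrary: F w rule: less_induct)
  case less
  show ?case
  proof (cases "card F \<le> card I")
    case True
    then show ?thesis using less.prems by blast
  next
    case False
    then obtain c where c: "\<exists>i\<in>F. c i \<noteq> 0" "\<forall>\<alpha>\<in>I. (\<Sum>i\<in>F. c i * V i \<alpha>) = 0"
      using lin_dep[OF assms(1) less.prems(1), of V] by auto
    have "\<exists>cp. (\<exists>i\<in>F. cp i > 0) \<and> (\<forall>\<alpha>\<in>I. (\<Sum>i\<in>F. cp i * V i \<alpha>) = 0)"
    proof (cases "\<exists>i\<in>F. c i > 0")
      case True then show ?thesis using c by blast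
    next
      case False
      then obtain i where "i \<in> F" "c i < 0" using c(1) by force
      moreover have "(\<Sum>i\<in>F. - c i * V i \<alpha>) = 0" if "\<alpha> \<in> I" for \<alpha>
        using c(2) that by (simp add: sum_negf)
      ultimately show ?thesis by (intro exI[of _ "\<lambda>i. - c i"]) auto
    qed
    then obtain cp where cp: "\<exists>i\<in>F. cp i > 0" "\<forall>\<alpha>\<in>I. (\<Sum>i\<in>F. cp i * V i \<alpha>) = 0" by blast
    define P where "P = {i\<in>F. cp i > 0}"
    have fP: "finite P" "P \<noteq> {}" using cp less.prems by (auto simp: P_def)
    define t where "t = Min ((\<lambda>i. w i / cp i) ` P)"
    have "t \<in> (\<lambda>i. w i / cp i) ` P" unfolding t_def using fP by (intro Min_in) auto
    then obtain i0 where i0: "i0 \<in> P" "w i0 / cp i0 = t" by auto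
    have tle: "t \<le> w i / cp i" if "i \<in> P" for i unfolding t_def using fP that by auto
    have t0: "0 \<le> t" using i0 less.prems by (auto simp: P_def)
    define w2 where "w2 i = w i - t * cp i" for i
    have w2nn: "0 \<le> w2 i" if "i \<in> F" for i
    proof (cases "cp i > 0")
      case True
      then have "t \<le> w i / cp i" using tle that by (auto simp: P_def)
      then have "t * cp i \<le> w i" using True by (simp add: pos_le_divide_eq)
      then show ?thesis by (simp add: w2_def)
    next
      case False
      then have "t * cp i \<le> 0" using t0 by (simp add: mult_nonneg_nonpos)
      moreover have "0 \<le> w i" using less.prems(2) that by auto
      ultimately show ?thesis by (simp add: w2_def)
    qed
    have w2i0: "w2 i0 = 0" using i0 by (auto simp: w2_def P_def)
    have i0F: "i0 \<in> F" using i0 by (auto simp: P_def)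
    have same: "(\<Sum>i\<in>F - {i0}. w2 i * V i \<alpha>) = (\<Sum>i\<in>F. w i * V i \<alpha>)" if "\<alpha> \<in> I" for \<alpha>
    proof -
      have "(\<Sum>i\<in>F - {i0}. w2 i * V i \<alpha>) = (\<Sum>i\<in>F. w2 i * V i \<alpha>)"
        using less.prems(1) i0F w2i0 by (simp add: sum_diff1)
      also have "\<dots> = (\<Sum>i\<in>F. w i * V i \<alpha>) - t * (\<Sum>i\<in>F. cp i * V i \<alpha>)"
      proof -
        have "w2 i * V i \<alpha> = w i * V i \<alpha> - t * (cp i * V i \<alpha>)" for i by (simp add: w2_def algebra_simps)
        then show ?thesis by (simp add: sum_subtractf sum_distrib_left)
      qed
      finally show ?thesis using cp(2) that by simp
    qed
    have "card F > 0" using i0F less.prems(1) card_gt_0_iff by blast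
    then have "card (F - {i0}) < card F" using i0F less.prems(1) by simp
    then obtain F' w' where F': "F' \<subseteq> F - {i0}" "card F' \<le> card I" "\<forall>i\<in>F'. 0 \<le> w' i"
      "\<forall>\<alpha>\<in>I. (\<Sum>i\<in>F'. w' i * V i \<alpha>) = (\<Sum>i\<in>F - {i0}. w2 i * V i \<alpha>)"
      using less.hyps[of "F - {i0}" w2] less.prems(1) w2nn by auto
    then show ?thesis using same by (intro exI[of _ F'] exI[of _ w']) auto
  qed
qed

lemma geom_le: assumes "0 \<le> q" "q < (1::real)" shows "(\<Sum>c\<in>{..M}. q ^ c) \<le> 1 / (1 - q)"
proof -
  have "(\<Sum>c\<in>{..M}. q ^ c) = (\<Sum>c<Suc M. q ^ c)" by (simp add: lessThan_Suc_atMost)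
  also have "\<dots> = (1 - q ^ Suc M) / (1 - q)" using assms by (subst sum_gp_strict) auto
  also have "\<dots> \<le> 1 / (1 - q)" using assms by (intro divide_right_mono) auto
  finally show ?thesis .
qed

lemma count_weights:
  fixes J :: "'i set"
  assumes "finite J" "card J = N" "N \<ge> 1"
  shows "ln (real (card {\<kappa> \<in> Pi\<^sub>E J (\<lambda>_. {..M}). (\<Sum>i\<in>J. \<kappa> i) \<le> M}))
          \<le> real N * (1 + ln (1 + real M / real N))"
proof -
  define A where "A = {\<kappa> \<in> Pi\<^sub>E J (\<lambda>_. {..M}). (\<Sum>i\<in>J. \<kappa> i) \<le> M}"
  have fP: "finite (Pi\<^sub>E J (\<lambda>_. {..M}))" using assms by (intro finite_PiE) auto
  have AP: "A \<subseteq> Pi\<^sub>E J (\<lambda>_. {..M})" by (auto simp: A_def)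
  have rhs0: "0 \<le> real N * (1 + ln (1 + real M / real N))" by simp
  show ?thesis
  proof (cases "M = 0")
    case True
    have "card A \<le> card (Pi\<^sub>E J (\<lambda>_. {..M}))" by (rule card_mono[OF fP AP])
    also have "\<dots> = 1" using True assms by (simp add: card_PiE)
    finally have "card A \<le> 1" .
    then have "ln (real (card A)) \<le> 0" by (cases "card A") auto
    then show ?thesis using rhs0 unfolding A_def by linarith
  next
    case False
    define q where "q = real M / (real M + real N)"
    have q0: "0 < q" and q1: "q < 1" using False assms by (auto simp: q_def)
    have "real (card A) = (\<Sum>\<kappa>\<in>A. 1)" by simp
    also have "\<dots> \<le> (\<Sum>\<kappa>\<in>A. q ^ (\<Sum>i\<in>J. \<kappa> i) / q ^ M)"
    proof (rule sum_mono)
      fix \<kappa> assume "\<kappa> \<in> A"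
      then have "(\<Sum>i\<in>J. \<kappa> i) \<le> M" by (auto simp: A_def)
      then have "q ^ M \<le> q ^ (\<Sum>i\<in>J. \<kappa> i)" using q0 q1 by (intro power_decreasing) auto
      then show "1 \<le> q ^ (\<Sum>i\<in>J. \<kappa> i) / q ^ M" using q0 by simp
    qed
    also have "\<dots> \<le> (\<Sum>\<kappa>\<in>Pi\<^sub>E J (\<lambda>_. {..M}). q ^ (\<Sum>i\<in>J. \<kappa> i) / q ^ M)"
      by (rule sum_mono2[OF fP AP]) (use q0 in auto)
    also have "\<dots> = (\<Sum>\<kappa>\<in>Pi\<^sub>E J (\<lambda>_. {..M}). \<Prod>i\<in>J. q ^ \<kappa> i) / q ^ M"
      by (simp add: sum_divide_distrib power_sum)
    also have "(\<Sum>\<kappa>\<in>Pi\<^sub>E J (\<lambda>_. {..M}). \<Prod>i\<in>J. q ^ \<kappa> i) = (\<Prod>i\<in>J. \<Sum>c\<in>{..M}. q ^ c)"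
      by (rule prod_sum_PiE[symmetric]) (use assms in auto)
    also have "\<dots> = (\<Sum>c\<in>{..M}. q ^ c) ^ N" using assms by simp
    also have "(\<Sum>c\<in>{..M}. q ^ c) ^ N / q ^ M \<le> (1 / (1 - q)) ^ N / q ^ M"
      using geom_le[of q M] q0 q1 by (intro divide_right_mono power_mono) (auto intro: sum_nonneg)
    finally have cA: "real (card A) \<le> (1 / (1 - q)) ^ N / q ^ M" .
    have e1: "1 / (1 - q) = 1 + real M / real N"
      using False assms by (simp add: q_def field_simps)
    have e2: "1 / q = 1 + real N / real M" using False assms by (simp add: q_def field_simps)
    have "ln ((1 / (1 - q)) ^ N / q ^ M) = real N * ln (1 + real M / real N) + real M * ln (1 + real N / real M)"
      using q0 q1 by (simp add: ln_div ln_realpow e1[symmetric] ln_div[of 1 q, simplified] e2[symmetric])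
    also have "real M * ln (1 + real N / real M) \<le> real M * (real N / real M)"
      by (intro mult_left_mono ln_add_one_self_le_self) auto
    also have "real M * (real N / real M) = real N" using False by simp
    finally have l2: "ln ((1 / (1 - q)) ^ N / q ^ M) \<le> real N * (1 + ln (1 + real M / real N))"
      by (simp add: algebra_simps)
    show ?thesis
    proof (cases "card A = 0")
      case True then show ?thesis using rhs0 by (simp add: A_def)
    next
      case False
      then have "ln (real (card A)) \<le> ln ((1 / (1 - q)) ^ N / q ^ M)" using cA by (intro ln_mono) auto
      then show ?thesis using l2 by (simp add: A_def)
    qed
  qed
qed

lemma disc_approx:
  fixes G :: "(real^'p) measure" and P :: "'g \<Rightarrow> (real^'p) set" and f :: "real^'p \<Rightarrow> real"
  assumes G: "prob_space G" "sets G = sets borel" "emeasure G K = 1"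
    and fin: "finite Gr" and meas: "\<forall>g\<in>Gr. P g \<in> sets borel"
    and disj: "disjoint_family_on P Gr" and cov: "K \<subseteq> (\<Union>g\<in>Gr. P g)"
    and f: "f \<in> borel_measurable borel" and bnd: "\<forall>\<beta>. \<bar>f \<beta>\<bar> \<le> B"
    and close: "\<forall>g\<in>Gr. \<forall>\<beta>\<in>P g. \<bar>f \<beta> - f (e g)\<bar> \<le> \<epsilon>"
  shows "\<bar>(\<integral>\<beta>. f \<beta> \<partial>G) - (\<Sum>g\<in>Gr. measure G (P g) * f (e g))\<bar> \<le> \<epsilon>"
    and "(\<Sum>g\<in>Gr. measure G (P g)) = 1"
proof -
  interpret prob_space G by (rule G(1))
  have sG: "sets G = sets borel" by (rule G(2))
  have fm: "f \<in> borel_measurable G" by (subst measurable_cong_sets[OF sG refl]) (rule f)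
  have Pm: "P g \<in> sets G" if "g \<in> Gr" for g using meas that sG by auto
  have Km: "K \<in> sets G" using G(3) measure_notin_sets by (metis emeasure_notin_sets zero_neq_one)
  have Um: "(\<Union>g\<in>Gr. P g) \<in> sets G" using Pm fin by auto
  have int: "integrable G f" by (rule integrable_const_bound[where B=B]) (use bnd fm in auto)
  have mU1: "measure G (\<Union>g\<in>Gr. P g) = 1"
  proof -
    have "measure G K = 1" using G(3) by (simp add: measure_def)
    moreover have "measure G K \<le> measure G (\<Union>g\<in>Gr. P g)" using cov Um by (intro finite_measure_mono) auto
    moreover have "measure G (\<Union>g\<in>Gr. P g) \<le> 1" by (rule prob_le_1)
    ultimately show ?thesis by linarith
  qed
  show sum1: "(\<Sum>g\<in>Gr. measure G (P g)) = 1"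
  proof -
    have "measure G (\<Union>g\<in>Gr. P g) = (\<Sum>g\<in>Gr. measure G (P g))"
      by (rule measure_finite_Union[OF fin _ disj]) (use Pm in \<open>auto simp: emeasure_finite\<close>)
    then show ?thesis using mU1 by simp
  qed
  have ae: "AE \<beta> in G. \<beta> \<in> (\<Union>g\<in>Gr. P g)" by (rule AE_prob_1[OF mU1])
  have ae2: "AE \<beta> in G. f \<beta> = (\<Sum>g\<in>Gr. f \<beta> * indicator (P g) \<beta>)"
    using ae
  proof eventually_elim
    case (elim \<beta>)
    then obtain j where "j \<in> Gr" "\<beta> \<in> P j" by auto
    then show ?case using sum_indicator_disjoint_family[OF disj, of \<beta> j "\<lambda>_. f \<beta>"] fin by simp
  qed
  have intg: "integrable G (\<lambda>\<beta>. f \<beta> * indicator (P g) \<beta>)" if "g \<in> Gr" for g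
    by (rule integrable_real_mult_indicator[OF Pm[OF that] int])
  have "(\<integral>\<beta>. f \<beta> \<partial>G) = (\<integral>\<beta>. (\<Sum>g\<in>Gr. f \<beta> * indicator (P g) \<beta>) \<partial>G)"
  proof (rule integral_cong_AE)
    show "f \<in> borel_measurable G" by (rule fm)
    show "(\<lambda>\<beta>. \<Sum>g\<in>Gr. f \<beta> * indicator (P g) \<beta>) \<in> borel_measurable G"
      using fm Pm by (intro borel_measurable_sum borel_measurable_times borel_measurable_indicator) auto
    show "AE \<beta> in G. f \<beta> = (\<Sum>g\<in>Gr. f \<beta> * indicator (P g) \<beta>)" by (rule ae2)
  qed
  also have "\<dots> = (\<Sum>g\<in>Gr. \<integral>\<beta>. f \<beta> * indicator (P g) \<beta> \<partial>G)"
    using Bochner_Integration.integral_sum[where I=Gr and M=G and f="\<lambda>g \<beta>. f \<beta> * indicator (P g) \<beta>"] intg by simp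
  finally have eq: "(\<integral>\<beta>. f \<beta> \<partial>G) = (\<Sum>g\<in>Gr. \<integral>\<beta>. f \<beta> * indicator (P g) \<beta> \<partial>G)" .
  have each: "\<bar>(\<integral>\<beta>. f \<beta> * indicator (P g) \<beta> \<partial>G) - measure G (P g) * f (e g)\<bar> \<le> \<epsilon> * measure G (P g)"
    if g: "g \<in> Gr" for g
  proof -
    have PI: "P g \<inter> space G = P g" using sets.sets_into_space[OF Pm[OF g]] by auto
    have ic: "integrable G (\<lambda>\<beta>. f (e g) * indicator (P g) \<beta>)"
      using Pm[OF g] by (intro integrable_real_mult_indicator) auto
    have "(\<integral>\<beta>. f (e g) * indicator (P g) \<beta> \<partial>G) = measure G (P g) * f (e g)"
      using sets.sets_into_space[OF Pm[OF g]] by (simp add: Int_absorb2)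
    then have "(\<integral>\<beta>. f \<beta> * indicator (P g) \<beta> \<partial>G) - measure G (P g) * f (e g)
       = (\<integral>\<beta>. f \<beta> * indicator (P g) \<beta> - f (e g) * indicator (P g) \<beta> \<partial>G)"
      using intg[OF g] ic by (simp add: PI)
    also have "\<bar>\<dots>\<bar> \<le> (\<integral>\<beta>. \<epsilon> * indicator (P g) \<beta> \<partial>G)"
    proof (rule integral_abs_bound_integral)
      show "integrable G (\<lambda>\<beta>. f \<beta> * indicator (P g) \<beta> - f (e g) * indicator (P g) \<beta>)"
        using intg[OF g] ic by auto
      show "integrable G (\<lambda>\<beta>. \<epsilon> * indicator (P g) \<beta>)"
        using Pm[OF g] by (intro integrable_real_mult_indicator) auto
      fix \<beta> show "\<bar>f \<beta> * indicator (P g) \<beta> - f (e g) * indicator (P g) \<beta>\<bar> \<le> \<epsilon> * indicator (P g) \<beta>"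
        using close g by (auto split: split_indicator simp: left_diff_distrib[symmetric])
    qed
    also have "(\<integral>\<beta>. \<epsilon> * indicator (P g) \<beta> \<partial>G) = \<epsilon> * measure G (P g)"
      using sets.sets_into_space[OF Pm[OF g]] by (simp add: Int_absorb2)
    finally show ?thesis .
  qed
  have "\<bar>(\<integral>\<beta>. f \<beta> \<partial>G) - (\<Sum>g\<in>Gr. measure G (P g) * f (e g))\<bar>
      = \<bar>\<Sum>g\<in>Gr. (\<integral>\<beta>. f \<beta> * indicator (P g) \<beta> \<partial>G) - measure G (P g) * f (e g)\<bar>"
    unfolding eq by (simp add: sum_subtractf)
  also have "\<dots> \<le> (\<Sum>g\<in>Gr. \<bar>(\<integral>\<beta>. f \<beta> * indicator (P g) \<beta> \<partial>G) - measure G (P g) * f (e g)\<bar>)"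
    by (rule sum_abs)
  also have "\<dots> \<le> (\<Sum>g\<in>Gr. \<epsilon> * measure G (P g))" by (rule sum_mono) (rule each)
  also have "\<dots> = \<epsilon>" using sum1 by (simp add: sum_distrib_left[symmetric])
  finally show "\<bar>(\<integral>\<beta>. f \<beta> \<partial>G) - (\<Sum>g\<in>Gr. measure G (P g) * f (e g))\<bar> \<le> \<epsilon>" .
qed

lemma T_facts:
  fixes s :: real
  assumes "0 < s" "s < exp (-1)"
  shows "1 < ln (1 / s)" "exp (- ln (1 / s)) = s" "s \<le> 1/2"
proof -
  have e: "exp (-1::real) = 1 / exp 1" by (simp add: exp_minus inverse_eq_divide)
  have "exp 1 < 1 / s" using assms unfolding e by (simp add: field_simps)
  then have "ln (exp 1) < ln (1 / s)" using assms by (subst ln_less_cancel_iff) auto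
  then show "1 < ln (1 / s)" by simp
  show "exp (- ln (1 / s)) = s" using assms by (simp add: ln_div exp_minus)
  have "exp (-1) \<le> (1/2::real)"
  proof -
    have "2 \<le> exp (1::real)" using exp_ge_add_one_self[of 1] by simp
    then show ?thesis by (simp add: exp_minus field_simps)
  qed
  then show "s \<le> 1/2" using assms by simp
qed

lemma cell_poly:
  fixes rx :: "real^'p::finite \<Rightarrow> real" and \<sigma> \<eta> y :: real
  assumes \<sigma>: "0 < \<sigma>" and \<eta>: "0 < \<eta>" and s1: "\<sigma> * \<eta> < exp (-1)"
    and rx: "poly_deg_le \<zeta> rx"
    and D: "D = 2 * nat \<lceil>420 * ln (1 / (\<sigma> * \<eta>))\<rceil> * \<zeta>"
  shows "\<exists>Pol. poly_deg_le D Pol \<and> (\<forall>\<beta>. \<bar>rx \<beta> - rx b\<bar> \<le> 2 * \<sigma> * sqrt (2 * ln (3 / (\<sigma> * \<eta>)))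
      \<longrightarrow> \<bar>(1/\<sigma>) * std_normal_density ((y - rx \<beta>) / \<sigma>) - Pol \<beta>\<bar> \<le> \<eta> / 8)"
proof -
  define s where "s = \<sigma> * \<eta>"
  define T where "T = ln (1 / s)"
  have s0: "0 < s" using \<sigma> \<eta> by (simp add: s_def)
  have T1: "1 < T" and expT: "exp (- T) = s" and sh: "s \<le> 1/2"
    using T_facts[OF s0 s1[folded s_def]] by (auto simp: T_def)
  define \<Lambda> where "\<Lambda> = ln (3 / s)"
  have \<Lambda>: "\<Lambda> = ln 3 + T" using s0 by (simp add: \<Lambda>_def T_def ln_div)
  have ln3: "ln (3::real) \<le> 2" using ln_le_minus_one[of 3] by simp
  have \<Lambda>0: "0 \<le> \<Lambda>" using \<Lambda> T1 by simp
  define a where "a = 2 * sqrt (2 * \<Lambda>)"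
  define B where "B = sqrt (4 * T + 4)"
  have a0: "0 \<le> a" and B0: "0 \<le> B" using \<Lambda>0 T1 by (auto simp: a_def B_def)
  have a2: "a\<^sup>2 = 8 * \<Lambda>" using \<Lambda>0 by (simp add: a_def power_mult_distrib)
  have B2: "B\<^sup>2 = 4 * T + 4" using T1 by (simp add: B_def)
  define k where "k = nat \<lceil>420 * T\<rceil>"
  have k: "420 * T \<le> real k" by (simp add: k_def) linarith
  have D': "D = 2 * k * \<zeta>" using D by (simp add: k_def T_def s_def)
  define u where "u = (y - rx b) / \<sigma>"
  define v where "v \<beta> = (y - rx \<beta>) / \<sigma>" for \<beta>
  have vu: "\<bar>v \<beta> - u\<bar> \<le> a" if "\<bar>rx \<beta> - rx b\<bar> \<le> 2 * \<sigma> * sqrt (2 * ln (3 / (\<sigma> * \<eta>)))" for \<beta>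
  proof -
    have "v \<beta> - u = (rx b - rx \<beta>) / \<sigma>" by (simp add: v_def u_def diff_divide_distrib)
    then have "\<bar>v \<beta> - u\<bar> = \<bar>rx \<beta> - rx b\<bar> / \<sigma>" using \<sigma> by (simp add: abs_minus_commute)
    also have "\<dots> \<le> (2 * \<sigma> * sqrt (2 * \<Lambda>)) / \<sigma>" using that \<sigma> by (intro divide_right_mono) (auto simp: \<Lambda>_def s_def)
    also have "\<dots> = a" using \<sigma> by (simp add: a_def)
    finally show ?thesis .
  qed
  show ?thesis
  proof (cases "B + a \<le> \<bar>u\<bar>")
    case True
    have "poly_deg_le D (\<lambda>_. 0)" by (rule poly_const)
    moreover have "\<bar>(1/\<sigma>) * std_normal_density ((y - rx \<beta>) / \<sigma>) - 0\<bar> \<le> \<eta> / 8"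
      if "\<bar>rx \<beta> - rx b\<bar> \<le> 2 * \<sigma> * sqrt (2 * ln (3 / (\<sigma> * \<eta>)))" for \<beta>
    proof -
      have "B \<le> \<bar>v \<beta>\<bar>" using vu[OF that] True by linarith
      then have "B\<^sup>2 \<le> \<bar>v \<beta>\<bar>\<^sup>2" using B0 by (intro power_mono) auto
      then have "B\<^sup>2 \<le> (v \<beta>)\<^sup>2" by simp
      then have vb: "4 * T + 4 \<le> (v \<beta>)\<^sup>2" using B2 by simp
      have "std_normal_density (v \<beta>) \<le> exp (- (v \<beta>)\<^sup>2 / 2)" by (rule h_le_exp)
      also have "\<dots> \<le> exp (- T + (- T - 2))" using vb by simp
      also have "\<dots> = exp (- T) * exp (- T - 2)" by (simp add: exp_add[symmetric])
      also have "\<dots> = s * exp (- T - 2)" by (simp add: expT)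
      also have "\<dots> \<le> s * (1/8)"
      proof -
        have "exp (- T - 2) \<le> exp (-3)" using T1 by simp
        also have "exp (-3::real) \<le> 1/8"
        proof -
          have "(2::real) ^ 3 \<le> exp 1 ^ 3" using exp_ge_add_one_self[of 1] by (intro power_mono) auto
          then have "8 \<le> exp (3::real)" by (simp add: exp_of_nat_mult[symmetric])
          then show ?thesis by (simp add: exp_minus field_simps)
        qed
        finally show ?thesis using s0 by (intro mult_left_mono) auto
      qed
      finally have "std_normal_density (v \<beta>) \<le> s / 8" by simp
      then have "(1/\<sigma>) * std_normal_density (v \<beta>) \<le> (1/\<sigma>) * (s / 8)" using \<sigma> by (intro mult_left_mono) auto
      also have "\<dots> = \<eta> / 8" using \<sigma> by (simp add: s_def)
      finally show ?thesis using h_nonneg[of "v \<beta>"] \<sigma> by (simp add: v_def)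
    qed
    ultimately show ?thesis by blast
  next
    case False
    define Pol where "Pol \<beta> = (1/\<sigma>) * ((1 / sqrt (2 * pi)) * (\<Sum>m<k. (- ((v \<beta>)\<^sup>2 / 2)) ^ m / fact m))" for \<beta>
    have pv: "poly_deg_le \<zeta> v"
    proof -
      have "poly_deg_le \<zeta> (\<lambda>\<beta>. (1/\<sigma>) * (y + (-1) * rx \<beta>))"
        by (intro poly_scale poly_add poly_const rx)
      moreover have "(\<lambda>\<beta>. (1/\<sigma>) * (y + (-1) * rx \<beta>)) = v" by (rule ext) (simp add: v_def diff_divide_distrib)
      ultimately show ?thesis by simp
    qed
    have pt: "poly_deg_le (\<zeta> + \<zeta>) (\<lambda>\<beta>. (-1/2) * (v \<beta> * v \<beta>))"
      by (intro poly_scale poly_mult pv)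
    have "poly_deg_le D Pol"
    proof -
      have "poly_deg_le D (\<lambda>\<beta>. (1/\<sigma>) * ((1 / sqrt (2 * pi)) * (\<Sum>m<k. (1 / fact m) * ((-1/2) * (v \<beta> * v \<beta>)) ^ m)))"
      proof (intro poly_scale poly_sum)
        fix m assume "m \<in> {..<k}"
        then have "m \<le> k" by simp
        then have "(\<zeta> + \<zeta>) * m \<le> (\<zeta> + \<zeta>) * k" by (rule mult_le_mono2)
        then have "(\<zeta> + \<zeta>) * m \<le> D" using D' by (simp add: algebra_simps)
        then show "poly_deg_le D (\<lambda>\<beta>. ((-1/2) * (v \<beta> * v \<beta>)) ^ m)"
          by (rule poly_le[OF poly_pow[OF pt]])
      qed simp
      moreover have "(\<lambda>\<beta>. (1/\<sigma>) * ((1 / sqrt (2 * pi)) * (\<Sum>m<k. (1 / fact m) * ((-1/2) * (v \<beta> * v \<beta>)) ^ m))) = Pol"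
        by (rule ext) (simp add: Pol_def power2_eq_square)
      ultimately show ?thesis by simp
    qed
    moreover have "\<bar>(1/\<sigma>) * std_normal_density ((y - rx \<beta>) / \<sigma>) - Pol \<beta>\<bar> \<le> \<eta> / 8"
      if "\<bar>rx \<beta> - rx b\<bar> \<le> 2 * \<sigma> * sqrt (2 * ln (3 / (\<sigma> * \<eta>)))" for \<beta>
    proof -
      define t where "t = (v \<beta>)\<^sup>2 / 2"
      have t0: "0 \<le> t" by (simp add: t_def)
      have "\<bar>v \<beta>\<bar> \<le> B + 2 * a" using vu[OF that] False by linarith
      moreover have "0 \<le> B + 2 * a" using a0 B0 by simp
      ultimately have "\<bar>v \<beta>\<bar>\<^sup>2 \<le> (B + 2 * a)\<^sup>2" by (intro power_mono) auto
      then have "(v \<beta>)\<^sup>2 \<le> (B + 2 * a)\<^sup>2" by simp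
      also have "\<dots> \<le> 2 * B\<^sup>2 + 2 * (2 * a)\<^sup>2" using sum_squares_ge_zero[of "B - 2*a" 0] by (simp add: power2_eq_square algebra_simps)
      also have "\<dots> = 8 * T + 8 + 64 * \<Lambda>" using a2 B2 by (simp add: power_mult_distrib)
      finally have "t \<le> 4 * T + 4 + 32 * \<Lambda>" by (simp add: t_def)
      also have "\<dots> \<le> 104 * T" using \<Lambda> ln3 T1 by simp
      finally have tT: "t \<le> 104 * T" .
      have "\<bar>exp (- t) - (\<Sum>m<k. (- t) ^ m / fact m)\<bar> \<le> exp (4 * t - real k)" by (rule exp_taylor_neg[OF t0])
      also have "\<dots> \<le> exp (- (4 * T))" using tT k by simp
      also have "\<dots> = exp (- T) ^ 4" by (simp add: exp_of_nat_mult[symmetric])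
      also have "\<dots> = s ^ 4" by (simp add: expT)
      finally have tay: "\<bar>exp (- t) - (\<Sum>m<k. (- t) ^ m / fact m)\<bar> \<le> s ^ 4" .
      have "(1/\<sigma>) * std_normal_density ((y - rx \<beta>) / \<sigma>) - Pol \<beta>
          = (1/\<sigma>) * ((1 / sqrt (2 * pi)) * (exp (- t) - (\<Sum>m<k. (- t) ^ m / fact m)))"
        by (simp add: Pol_def std_normal_density_def t_def v_def right_diff_distrib)
      then have "\<bar>(1/\<sigma>) * std_normal_density ((y - rx \<beta>) / \<sigma>) - Pol \<beta>\<bar>
          = (1/\<sigma>) * ((1 / sqrt (2 * pi)) * \<bar>exp (- t) - (\<Sum>m<k. (- t) ^ m / fact m)\<bar>)"
        using \<sigma> by (simp add: abs_mult)
      also have "\<dots> \<le> (1/\<sigma>) * (1 * s ^ 4)"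
        using tay sq2pi \<sigma> by (intro mult_left_mono mult_mono) (auto simp: divide_le_eq)
      also have "\<dots> = \<eta> * s ^ 3" using \<sigma> by (simp add: s_def power4_eq_xxxx power3_eq_cube)
      also have "\<dots> \<le> \<eta> * (1/2) ^ 3" using sh s0 \<eta> by (intro mult_left_mono power_mono) auto
      finally show ?thesis by (simp add: power3_eq_cube)
    qed
    ultimately show ?thesis by blast
  qed
qed

definition gr :: "real \<Rightarrow> real^'p::finite \<Rightarrow> ('p \<Rightarrow> int)" where
  "gr d \<beta> = (\<lambda>i. \<lfloor>\<beta> $ i / d\<rfloor>)"

lemma floor_eq_close: assumes "\<lfloor>a\<rfloor> = \<lfloor>b::real\<rfloor>" shows "\<bar>a - b\<bar> < 1"
proof -
  have "of_int \<lfloor>a\<rfloor> \<le> a" "a < of_int \<lfloor>a\<rfloor> + 1" "of_int \<lfloor>b\<rfloor> \<le> b" "b < of_int \<lfloor>b\<rfloor> + 1"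
    by linarith+
  then show ?thesis using assms by linarith
qed

lemma gr_eq_coord:
  fixes \<beta> \<beta>' :: "real^'p::finite"
  assumes eq: "gr d \<beta> = gr d \<beta>'"
  shows "\<lfloor>\<beta> $ i / d\<rfloor> = \<lfloor>\<beta>' $ i / d\<rfloor>" using fun_cong[OF eq, of i] by (simp add: gr_def)

lemma div_close: "\<bar>a / d - b / d\<bar> < 1 \<Longrightarrow> 0 < d \<Longrightarrow> \<bar>a - b\<bar> \<le> (d::real)"
proof -
  assume 1: "\<bar>a / d - b / d\<bar> < 1" and d: "0 < d"
  have "a / d - b / d = (a - b) / d" by (rule diff_divide_distrib[symmetric])
  then have "\<bar>(a - b) / d\<bar> < 1" using 1 by simp
  then have "\<bar>a - b\<bar> / d < 1" using d by (simp only: abs_divide abs_of_pos)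
  then have "\<bar>a - b\<bar> < d" using d by (simp only: pos_divide_less_eq mult_1)
  then show "\<bar>a - b\<bar> \<le> d" by (rule less_imp_le)
qed

lemma norm_coord_bound: fixes x :: "real^'p::finite" assumes "\<And>i. \<bar>x $ i\<bar> \<le> d"
  shows "norm x \<le> real CARD('p) * d"
proof -
  have "norm x \<le> (\<Sum>i\<in>UNIV. \<bar>x $ i\<bar>)" by (rule norm_le_l1_cart)
  also have "\<dots> \<le> (\<Sum>i\<in>(UNIV::'p set). d)" by (rule sum_mono) (rule assms)
  also have "\<dots> = real CARD('p) * d" by simp
  finally show ?thesis .
qed

lemma grid_close:
  fixes \<beta> \<beta>' :: "real^'p::finite"
  assumes d: "0 < d" and eq: "gr d \<beta> = gr d \<beta>'"
  shows "norm (\<beta> - \<beta>') \<le> real CARD('p) * d"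
proof (rule norm_coord_bound)
  fix i
  have "\<bar>\<beta> $ i - \<beta>' $ i\<bar> \<le> d"
    by (rule div_close[OF floor_eq_close[OF gr_eq_coord[OF eq]] d])
  then show "\<bar>(\<beta> - \<beta>') $ i\<bar> \<le> d" by simp
qed

lemma grid_sub:
  fixes c :: "real^'p::finite"
  assumes d: "0 < d"
  shows "gr d ` cball c \<rho> \<subseteq> Pi\<^sub>E UNIV (\<lambda>i. {\<lfloor>(c $ i - \<rho>) / d\<rfloor> .. \<lfloor>(c $ i + \<rho>) / d\<rfloor>})"
proof
  fix g assume "g \<in> gr d ` cball c \<rho>"
  then obtain \<beta> where \<beta>: "\<beta> \<in> cball c \<rho>" "g = gr d \<beta>" by auto
  have h: "\<bar>(c - \<beta>) $ i\<bar> \<le> \<rho>" for i using component_le_norm_cart[of "c - \<beta>" i] \<beta>(1) by (simp add: dist_norm)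
  have "c $ i - \<rho> \<le> \<beta> $ i \<and> \<beta> $ i \<le> c $ i + \<rho>" for i using h[of i] by (auto simp: abs_le_iff)
  then have "(c $ i - \<rho>) / d \<le> \<beta> $ i / d \<and> \<beta> $ i / d \<le> (c $ i + \<rho>) / d" for i
    using d by (simp add: divide_right_mono)
  then have "\<lfloor>(c $ i - \<rho>) / d\<rfloor> \<le> g i \<and> g i \<le> \<lfloor>(c $ i + \<rho>) / d\<rfloor>" for i
    unfolding \<beta>(2) gr_def by (auto intro: floor_mono)
  then show "g \<in> Pi\<^sub>E UNIV (\<lambda>i. {\<lfloor>(c $ i - \<rho>) / d\<rfloor> .. \<lfloor>(c $ i + \<rho>) / d\<rfloor>})" by auto
qed

lemma grid_finite:
  fixes c :: "real^'p::finite"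
  assumes d: "0 < d"
  shows "finite (gr d ` cball c \<rho>)"
  by (rule finite_subset[OF grid_sub[OF d]]) (auto intro: finite_PiE)

lemma grid_count:
  fixes c :: "real^'p::finite"
  assumes d: "0 < d" and \<rho>: "0 \<le> \<rho>"
  shows "real (card (gr d ` cball c \<rho>)) \<le> (2 * \<rho> / d + 2) ^ CARD('p)"
proof -
  define lo where "lo i = \<lfloor>(c $ i - \<rho>) / d\<rfloor>" for i
  define hi where "hi i = \<lfloor>(c $ i + \<rho>) / d\<rfloor>" for i
  have "card (gr d ` cball c \<rho>) \<le> card (Pi\<^sub>E (UNIV::'p set) (\<lambda>i. {lo i .. hi i}))"
    by (rule card_mono) (use grid_sub[OF d, of c \<rho>] in \<open>auto intro: finite_PiE simp: lo_def hi_def\<close>)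
  also have "\<dots> = (\<Prod>i\<in>UNIV. nat (hi i - lo i + 1))" by (simp add: card_PiE)
  finally have "real (card (gr d ` cball c \<rho>)) \<le> real (\<Prod>i\<in>UNIV. nat (hi i - lo i + 1))"
    by (simp only: of_nat_le_iff)
  also have "\<dots> = (\<Prod>i\<in>UNIV. real (nat (hi i - lo i + 1)))" by (rule of_nat_prod)
  also have "\<dots> \<le> (\<Prod>i\<in>(UNIV::'p set). 2 * \<rho> / d + 2)"
  proof (rule prod_mono)
    fix i :: 'p
    have "of_int (hi i) \<le> (c $ i + \<rho>) / d" unfolding hi_def by linarith
    moreover have "(c $ i - \<rho>) / d < of_int (lo i) + 1" unfolding lo_def by linarith
    ultimately have "of_int (hi i - lo i + 1) \<le> (c $ i + \<rho>) / d - (c $ i - \<rho>) / d + 2" by simp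
    also have "\<dots> = 2 * \<rho> / d + 2" by (simp add: diff_divide_distrib[symmetric])
    finally have *: "real_of_int (hi i - lo i + 1) \<le> 2 * \<rho> / d + 2" .
    have "real (nat (hi i - lo i + 1)) \<le> 2 * \<rho> / d + 2"
      using * d \<rho> by (cases "hi i - lo i + 1 \<ge> 0") auto
    then show "0 \<le> real (nat (hi i - lo i + 1)) \<and> real (nat (hi i - lo i + 1)) \<le> 2 * \<rho> / d + 2" by simp
  qed
  also have "\<dots> = (2 * \<rho> / d + 2) ^ CARD('p)" by simp
  finally show ?thesis .
qed

locale cfg =
  fixes K :: "(real^'p::finite) set" and S0 :: "'x set" and \<sigma> \<eta> L :: real
    and r :: "'x \<Rightarrow> real^'p \<Rightarrow> real" and \<zeta> :: nat and S :: "(real^'p) set"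
  assumes K: "compact K" "K \<noteq> {}" and \<sigma>: "0 < \<sigma>" and \<eta>: "0 < \<eta>" and s1: "\<sigma> * \<eta> < exp (-1)"
    and L: "0 < L" and poly: "\<forall>x. poly_deg_le \<zeta> (r x)" and \<zeta>: "1 \<le> \<zeta>"
    and lip: "\<forall>x\<in>S0. \<forall>b1\<in>K. \<forall>b2\<in>K. \<bar>r x b1 - r x b2\<bar> \<le> L * norm (b1 - b2)"
    and S: "finite S" and cov: "\<forall>t\<in>K. \<exists>s\<in>S. dist s t \<le> \<sigma> / L * sqrt (2 * ln (3 / (\<sigma> * \<eta>)))"
begin

definition "Tt = ln (1 / (\<sigma> * \<eta>))"
definition "rho = \<sigma> / L * sqrt (2 * ln (3 / (\<sigma> * \<eta>)))"
definition "delta = \<eta> * \<sigma>\<^sup>2 / (4 * L)"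
definition "dd = delta / real CARD('p)"
definition "Gr = gr dd ` K"
definition "ee g = (SOME \<beta>. \<beta> \<in> K \<and> gr dd \<beta> = g)"
definition "cell g = (SOME s. s \<in> S \<and> dist s (ee g) \<le> rho)"
definition "Cells = cell ` Gr"
definition "Cg j = {g \<in> Gr. cell g = j}"
definition "bc j = ee (SOME g. g \<in> Cg j)"
definition "EE j = ee ` Cg j"
definition "kk = nat \<lceil>420 * Tt\<rceil>"
definition "DD = 2 * kk * \<zeta>"
definition "II = (Idx DD :: ('p \<Rightarrow> nat) set)"
definition "mm = card II"
definition "JJ = Cells \<times> {..<mm}"
definition "NN = card JJ"
definition "nu = \<sigma> * \<eta> / 4 / real NN"
definition "MM = nat \<lfloor>1 / nu\<rfloor>"
definition "gf x y \<beta> = (1/\<sigma>) * std_normal_density ((y - r x \<beta>) / \<sigma>)"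
definition "Fz z \<kappa> = (\<lambda>x y. \<Sum>q\<in>JJ. nu * real (\<kappa> q) * gf x y (z q))"
definition "ZZ = Pi\<^sub>E JJ (\<lambda>q. EE (fst q))"
definition "Kp = {\<kappa> \<in> Pi\<^sub>E JJ (\<lambda>_. {..MM}). (\<Sum>q\<in>JJ. \<kappa> q) \<le> MM}"

lemma s0: "0 < \<sigma> * \<eta>" using \<sigma> \<eta> by (rule mult_pos_pos)

lemma Tt: "1 < Tt" "exp (- Tt) = \<sigma> * \<eta>" "\<sigma> * \<eta> \<le> 1/2"
  unfolding Tt_def by (fact T_facts[OF s0 s1])+

lemma ln3: "ln (3 / (\<sigma> * \<eta>)) = ln 3 + Tt"
  using \<sigma> \<eta> by (simp add: Tt_def ln_div)

lemma ln3_pos: "0 < ln (3 / (\<sigma> * \<eta>))"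
proof -
  have "0 < ln (3::real)" by simp
  then show ?thesis using ln3 Tt(1) by linarith
qed

lemma rho_pos: "0 < rho" using \<sigma> L ln3_pos by (simp add: rho_def)

lemma rho_L: "L * rho = \<sigma> * sqrt (2 * ln (3 / (\<sigma> * \<eta>)))" using L by (simp add: rho_def)

lemma delta_pos: "0 < delta" using \<sigma> \<eta> L by (simp add: delta_def)

lemma dd_pos: "0 < dd" using delta_pos by (simp add: dd_def)

lemma finite_Gr: "finite Gr"
proof -
  obtain c R where "K \<subseteq> cball c R" using compact_imp_bounded[OF K(1)] bounded_subset_cball by blast
  then have "Gr \<subseteq> gr dd ` cball c R" by (auto simp: Gr_def)
  then show ?thesis using grid_finite[OF dd_pos] finite_subset by blast
qed

lemma ee: assumes "g \<in> Gr" shows "ee g \<in> K" "gr dd (ee g) = g"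
proof -
  have "\<exists>\<beta>. \<beta> \<in> K \<and> gr dd \<beta> = g" using assms by (auto simp: Gr_def)
  then have "ee g \<in> K \<and> gr dd (ee g) = g" unfolding ee_def by (rule someI_ex)
  then show "ee g \<in> K" "gr dd (ee g) = g" by auto
qed

lemma cell: assumes "g \<in> Gr" shows "cell g \<in> S" "dist (cell g) (ee g) \<le> rho"
proof -
  have "\<exists>s. s \<in> S \<and> dist s (ee g) \<le> rho" using cov ee(1)[OF assms] by (auto simp: rho_def)
  then have "cell g \<in> S \<and> dist (cell g) (ee g) \<le> rho" unfolding cell_def by (rule someI_ex)
  then show "cell g \<in> S" "dist (cell g) (ee g) \<le> rho" by auto
qed

lemma Cells_sub: "Cells \<subseteq> S" using cell by (auto simp: Cells_def)
lemma finite_Cells: "finite Cells" using finite_Gr by (simp add: Cells_def)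
lemma card_Cells: "card Cells \<le> card S" using card_mono[OF S Cells_sub] .

lemma Gr_ne: "Gr \<noteq> {}" using K(2) by (simp add: Gr_def)
lemma Cells_ne: "Cells \<noteq> {}" using Gr_ne by (simp add: Cells_def)

lemma Cg_sub: "Cg j \<subseteq> Gr" by (auto simp: Cg_def)
lemma finite_Cg: "finite (Cg j)" using finite_subset[OF Cg_sub finite_Gr] .

lemma Cg_ne: assumes "j \<in> Cells" shows "Cg j \<noteq> {}"
  using assms by (auto simp: Cells_def Cg_def)

lemma bc: assumes "j \<in> Cells" shows "bc j \<in> K" "dist j (bc j) \<le> rho"
proof -
  define g0 where "g0 = (SOME g. g \<in> Cg j)"
  obtain g1 where "g1 \<in> Cg j" using Cg_ne[OF assms] by blast
  then have g: "g0 \<in> Cg j" unfolding g0_def by (rule someI[where P="\<lambda>g. g \<in> Cg j"])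
  then have g0: "g0 \<in> Gr" "cell g0 = j" by (auto simp: Cg_def)
  have b: "bc j = ee g0" by (simp add: bc_def g0_def)
  show "bc j \<in> K" unfolding b by (rule ee(1)[OF g0(1)])
  show "dist j (bc j) \<le> rho" unfolding b using cell(2)[OF g0(1)] g0(2) by simp
qed

lemma near_bc: assumes "j \<in> Cells" "g \<in> Cg j" shows "norm (ee g - bc j) \<le> 2 * rho"
proof -
  have g: "g \<in> Gr" "cell g = j" using assms(2) by (auto simp: Cg_def)
  have "dist (ee g) (bc j) \<le> dist (ee g) j + dist j (bc j)" by (rule dist_triangle)
  also have "\<dots> \<le> rho + rho" using cell(2)[OF g(1)] bc(2)[OF assms(1)] g(2) by (simp add: dist_commute)
  finally show ?thesis by (simp add: dist_norm)
qed

lemma card_Cg: assumes "j \<in> Cells" shows "real (card (Cg j)) \<le> (2 * rho / dd + 2) ^ CARD('p)"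
proof -
  have "Cg j \<subseteq> gr dd ` cball j rho"
  proof
    fix g assume "g \<in> Cg j"
    then have g: "g \<in> Gr" "cell g = j" by (auto simp: Cg_def)
    have eb: "ee g \<in> cball j rho" using cell(2)[OF g(1)] g(2) by (simp add: dist_commute)
    show "g \<in> gr dd ` cball j rho"
    proof (rule image_eqI[where x="ee g"])
      show "g = gr dd (ee g)" using ee(2)[OF g(1)] by simp
    qed (rule eb)
  qed
  then have "card (Cg j) \<le> card (gr dd ` cball j rho)" by (rule card_mono[OF grid_finite[OF dd_pos]])
  then have "real (card (Cg j)) \<le> real (card (gr dd ` cball j rho))" by simp
  also have "\<dots> \<le> (2 * rho / dd + 2) ^ CARD('p)" by (rule grid_count[OF dd_pos less_imp_le[OF rho_pos]])
  finally show ?thesis .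
qed

lemma card_EE: "card (EE j) \<le> card (Cg j)" unfolding EE_def by (rule card_image_le[OF finite_Cg])

lemma EE_ne: assumes "j \<in> Cells" shows "EE j \<noteq> {}" using Cg_ne[OF assms] by (simp add: EE_def)

lemma finite_II: "finite II" by (simp add: II_def finite_Idx)
lemma mm_pos: "1 \<le> mm"
proof -
  have "II \<noteq> {}" using zero_Idx by (auto simp: II_def)
  then show ?thesis using finite_II by (simp add: mm_def Suc_le_eq card_gt_0_iff)
qed
lemma mm_le: "mm \<le> (DD + 1) ^ CARD('p)" unfolding mm_def II_def by (rule card_Idx)

lemma finite_JJ: "finite JJ" using finite_Cells by (simp add: JJ_def)
lemma NN_eq: "NN = card Cells * mm" by (simp add: NN_def JJ_def card_cartesian_product)
lemma NN_pos: "1 \<le> NN"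
proof -
  have "1 \<le> card Cells" using finite_Cells Cells_ne by (simp add: Suc_le_eq card_gt_0_iff)
  then have "1 * 1 \<le> card Cells * mm" using mm_pos by (rule mult_le_mono)
  then show ?thesis by (simp add: NN_eq)
qed
lemma nu_pos: "0 < nu" using s0 NN_pos by (simp add: nu_def)

end

lemma cell_err:
  fixes pt :: "'g \<Rightarrow> real^'p::finite"
  assumes fA: "finite A" and fB: "finite B" and wA: "\<forall>g\<in>A. 0 \<le> w g" and wB: "\<forall>g\<in>B. 0 \<le> w' g"
    and mom: "\<forall>\<alpha>\<in>Idx D. (\<Sum>g\<in>B. w' g * mono \<alpha> (pt g)) = (\<Sum>g\<in>A. w g * mono \<alpha> (pt g))"
    and Pol: "poly_deg_le D Pol" and close: "\<forall>g\<in>A \<union> B. \<bar>\<phi> (pt g) - Pol (pt g)\<bar> \<le> \<epsilon>"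
  shows "(\<Sum>g\<in>B. w' g) = (\<Sum>g\<in>A. w g)"
    and "\<bar>(\<Sum>g\<in>A. w g * \<phi> (pt g)) - (\<Sum>g\<in>B. w' g * \<phi> (pt g))\<bar> \<le> 2 * \<epsilon> * (\<Sum>g\<in>A. w g)"
proof -
  have m0: "(\<Sum>g\<in>B. w' g * mono (\<lambda>_. 0) (pt g)) = (\<Sum>g\<in>A. w g * mono (\<lambda>_. 0) (pt g))"
    using mom zero_Idx by blast
  then show mass: "(\<Sum>g\<in>B. w' g) = (\<Sum>g\<in>A. w g)" by simp
  obtain c where c: "\<And>\<beta>. Pol \<beta> = (\<Sum>\<alpha>\<in>Idx D. c \<alpha> * mono \<alpha> \<beta>)" using Pol by (auto simp: poly_iff)
  have polsum: "(\<Sum>g\<in>X. v g * Pol (pt g)) = (\<Sum>\<alpha>\<in>Idx D. c \<alpha> * (\<Sum>g\<in>X. v g * mono \<alpha> (pt g)))" for X v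
  proof -
    have "(\<Sum>g\<in>X. v g * Pol (pt g)) = (\<Sum>g\<in>X. \<Sum>\<alpha>\<in>Idx D. c \<alpha> * (v g * mono \<alpha> (pt g)))"
      by (simp add: c sum_distrib_left mult_ac)
    also have "\<dots> = (\<Sum>\<alpha>\<in>Idx D. \<Sum>g\<in>X. c \<alpha> * (v g * mono \<alpha> (pt g)))" by (rule sum.swap)
    also have "\<dots> = (\<Sum>\<alpha>\<in>Idx D. c \<alpha> * (\<Sum>g\<in>X. v g * mono \<alpha> (pt g)))" by (simp add: sum_distrib_left)
    finally show ?thesis .
  qed
  have peq: "(\<Sum>g\<in>B. w' g * Pol (pt g)) = (\<Sum>g\<in>A. w g * Pol (pt g))"
    unfolding polsum using mom by (intro sum.cong refl) auto
  have "(\<Sum>g\<in>A. w g * \<phi> (pt g)) - (\<Sum>g\<in>B. w' g * \<phi> (pt g))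
      = (\<Sum>g\<in>A. w g * (\<phi> (pt g) - Pol (pt g))) - (\<Sum>g\<in>B. w' g * (\<phi> (pt g) - Pol (pt g)))"
    using peq by (simp add: right_diff_distrib sum_subtractf)
  also have "\<bar>\<dots>\<bar> \<le> \<bar>\<Sum>g\<in>A. w g * (\<phi> (pt g) - Pol (pt g))\<bar> + \<bar>\<Sum>g\<in>B. w' g * (\<phi> (pt g) - Pol (pt g))\<bar>"
    by (rule abs_triangle_ineq4)
  also have "\<bar>\<Sum>g\<in>A. w g * (\<phi> (pt g) - Pol (pt g))\<bar> \<le> (\<Sum>g\<in>A. w g * \<epsilon>)"
  proof -
    have "\<bar>\<Sum>g\<in>A. w g * (\<phi> (pt g) - Pol (pt g))\<bar> \<le> (\<Sum>g\<in>A. \<bar>w g * (\<phi> (pt g) - Pol (pt g))\<bar>)" by (rule sum_abs)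
    also have "\<dots> \<le> (\<Sum>g\<in>A. w g * \<epsilon>)"
    proof (rule sum_mono)
      fix g assume g: "g \<in> A"
      have "\<bar>w g * (\<phi> (pt g) - Pol (pt g))\<bar> = w g * \<bar>\<phi> (pt g) - Pol (pt g)\<bar>" using wA g by (simp add: abs_mult)
      also have "\<dots> \<le> w g * \<epsilon>" using wA g close by (intro mult_left_mono) auto
      finally show "\<bar>w g * (\<phi> (pt g) - Pol (pt g))\<bar> \<le> w g * \<epsilon>" .
    qed
    finally show ?thesis .
  qed
  also have "\<bar>\<Sum>g\<in>B. w' g * (\<phi> (pt g) - Pol (pt g))\<bar> \<le> (\<Sum>g\<in>B. w' g * \<epsilon>)"
  proof -
    have "\<bar>\<Sum>g\<in>B. w' g * (\<phi> (pt g) - Pol (pt g))\<bar> \<le> (\<Sum>g\<in>B. \<bar>w' g * (\<phi> (pt g) - Pol (pt g))\<bar>)" by (rule sum_abs)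
    also have "\<dots> \<le> (\<Sum>g\<in>B. w' g * \<epsilon>)"
    proof (rule sum_mono)
      fix g assume g: "g \<in> B"
      have "\<bar>w' g * (\<phi> (pt g) - Pol (pt g))\<bar> = w' g * \<bar>\<phi> (pt g) - Pol (pt g)\<bar>" using wB g by (simp add: abs_mult)
      also have "\<dots> \<le> w' g * \<epsilon>" using wB g close by (intro mult_left_mono) auto
      finally show "\<bar>w' g * (\<phi> (pt g) - Pol (pt g))\<bar> \<le> w' g * \<epsilon>" .
    qed
    finally show ?thesis .
  qed
  also have "(\<Sum>g\<in>A. w g * \<epsilon>) + (\<Sum>g\<in>B. w' g * \<epsilon>) = 2 * \<epsilon> * (\<Sum>g\<in>A. w g)"
    using mass by (simp add: sum_distrib_right[symmetric])
  finally show "\<bar>(\<Sum>g\<in>A. w g * \<phi> (pt g)) - (\<Sum>g\<in>B. w' g * \<phi> (pt g))\<bar> \<le> 2 * \<epsilon> * (\<Sum>g\<in>A. w g)" by simp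
qed

context cfg begin

definition "PP g = K \<inter> {\<beta>. gr dd \<beta> = g}"

lemma coord_meas: "(\<lambda>\<beta>::real^'p. \<beta> $ i) \<in> borel_measurable borel"
  by (intro borel_measurable_continuous_onI continuous_intros)

lemma floor_set_borel: "{\<beta>::real^'p. \<lfloor>\<beta> $ i / d\<rfloor> = (c::int)} \<in> sets borel"
proof -
  have [measurable]: "(\<lambda>\<beta>::real^'p. \<beta> $ i) \<in> borel_measurable borel" by (rule coord_meas)
  show ?thesis by measurable
qed

lemma PP_borel: "PP g \<in> sets borel"
proof -
  have "{\<beta>::real^'p. gr dd \<beta> = g} = (\<Inter>i\<in>UNIV. {\<beta>. \<lfloor>\<beta> $ i / dd\<rfloor> = g i})"
    by (auto simp: gr_def fun_eq_iff)
  also have "\<dots> \<in> sets borel" using floor_set_borel by (intro sets.finite_INT) auto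
  finally have "{\<beta>::real^'p. gr dd \<beta> = g} \<in> sets borel" .
  moreover have "K \<in> sets borel" using compact_imp_closed[OF K(1)] by (rule borel_closed)
  ultimately show ?thesis unfolding PP_def by (rule sets.Int[rotated])
qed

lemma PP_disj: "disjoint_family_on PP Gr"
  unfolding disjoint_family_on_def PP_def by auto

lemma PP_cov: "K \<subseteq> (\<Union>g\<in>Gr. PP g)"
  unfolding PP_def Gr_def by auto

lemma PP_close: assumes "g \<in> Gr" "\<beta> \<in> PP g" shows "norm (\<beta> - ee g) \<le> delta"
proof -
  have "gr dd \<beta> = gr dd (ee g)" using assms ee(2)[OF assms(1)] by (simp add: PP_def)
  then have "norm (\<beta> - ee g) \<le> real CARD('p) * dd" by (rule grid_close[OF dd_pos])
  then show ?thesis by (simp add: dd_def)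
qed

lemma PP_K: "PP g \<subseteq> K" by (auto simp: PP_def)

lemma gf_nonneg: "0 \<le> gf x y \<beta>" using \<sigma> h_nonneg by (simp add: gf_def)

lemma gf_le: "gf x y \<beta> \<le> 1 / \<sigma>"
  using \<sigma> h_le_1[of "(y - r x \<beta>) / \<sigma>"] by (simp add: gf_def divide_le_eq)

lemma gf_abs: "\<bar>gf x y \<beta>\<bar> \<le> 1 / \<sigma>" using gf_nonneg gf_le by simp

lemma gf_lip: assumes "x \<in> S0" "\<beta> \<in> K" "\<beta>' \<in> K"
  shows "\<bar>gf x y \<beta> - gf x y \<beta>'\<bar> \<le> L * norm (\<beta> - \<beta>') / \<sigma>\<^sup>2"
proof -
  have "\<bar>std_normal_density ((y - r x \<beta>) / \<sigma>) - std_normal_density ((y - r x \<beta>') / \<sigma>)\<bar>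
      \<le> \<bar>(y - r x \<beta>) / \<sigma> - (y - r x \<beta>') / \<sigma>\<bar>" by (rule h_lip)
  also have "(y - r x \<beta>) / \<sigma> - (y - r x \<beta>') / \<sigma> = (r x \<beta>' - r x \<beta>) / \<sigma>" by (simp add: diff_divide_distrib)
  also have "\<bar>(r x \<beta>' - r x \<beta>) / \<sigma>\<bar> = \<bar>r x \<beta> - r x \<beta>'\<bar> / \<sigma>" using \<sigma> by (simp add: abs_minus_commute)
  also have "\<dots> \<le> L * norm (\<beta> - \<beta>') / \<sigma>" using lip assms \<sigma> by (intro divide_right_mono) auto
  finally have *: "\<bar>std_normal_density ((y - r x \<beta>) / \<sigma>) - std_normal_density ((y - r x \<beta>') / \<sigma>)\<bar> \<le> L * norm (\<beta> - \<beta>') / \<sigma>" .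
  have "\<bar>gf x y \<beta> - gf x y \<beta>'\<bar> = (1/\<sigma>) * \<bar>std_normal_density ((y - r x \<beta>) / \<sigma>) - std_normal_density ((y - r x \<beta>') / \<sigma>)\<bar>"
    using \<sigma> unfolding gf_def right_diff_distrib[symmetric] abs_mult by simp
  also have "\<dots> \<le> (1/\<sigma>) * (L * norm (\<beta> - \<beta>') / \<sigma>)" using * \<sigma> by (intro mult_left_mono) auto
  also have "\<dots> = L * norm (\<beta> - \<beta>') / \<sigma>\<^sup>2" by (simp add: power2_eq_square)
  finally show ?thesis .
qed

lemma gf_meas: "gf x y \<in> borel_measurable borel"
proof -
  have rc: "continuous_on UNIV (r x)" using poly continuous_poly by blast
  have "continuous_on UNIV (\<lambda>\<beta>. (1/\<sigma>) * ((1 / sqrt (2 * pi)) * exp (- ((y - r x \<beta>) / \<sigma>)\<^sup>2 / 2)))"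
    using \<sigma> by (intro continuous_intros rc) auto
  then have "continuous_on UNIV (gf x y)" by (simp add: gf_def std_normal_density_def)
  then show ?thesis by (rule borel_measurable_continuous_onI)
qed

lemma step1:
  assumes G: "prob_space G" "sets G = sets borel" "emeasure G K = 1" and x: "x \<in> S0"
  shows "\<bar>mix_density \<sigma> r G x y - (\<Sum>g\<in>Gr. measure G (PP g) * gf x y (ee g))\<bar> \<le> \<eta> / 4"
    and "(\<Sum>g\<in>Gr. measure G (PP g)) = 1"
proof -
  have close: "\<forall>g\<in>Gr. \<forall>\<beta>\<in>PP g. \<bar>gf x y \<beta> - gf x y (ee g)\<bar> \<le> \<eta> / 4"
  proof (intro ballI)
    fix g \<beta> assume g: "g \<in> Gr" and b: "\<beta> \<in> PP g"
    have "\<bar>gf x y \<beta> - gf x y (ee g)\<bar> \<le> L * norm (\<beta> - ee g) / \<sigma>\<^sup>2"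
      using gf_lip[OF x _ ee(1)[OF g]] b PP_K by blast
    also have "\<dots> \<le> L * delta / \<sigma>\<^sup>2" using PP_close[OF g b] L \<sigma> by (intro divide_right_mono mult_left_mono) auto
    also have "\<dots> = \<eta> / 4" using L \<sigma> by (simp add: delta_def power2_eq_square)
    finally show "\<bar>gf x y \<beta> - gf x y (ee g)\<bar> \<le> \<eta> / 4" .
  qed
  have md: "mix_density \<sigma> r G x y = (\<integral>\<beta>. gf x y \<beta> \<partial>G)" by (simp add: mix_density_def gf_def)
  show "\<bar>mix_density \<sigma> r G x y - (\<Sum>g\<in>Gr. measure G (PP g) * gf x y (ee g))\<bar> \<le> \<eta> / 4"
    unfolding md by (rule disc_approx(1)[OF G finite_Gr _ PP_disj PP_cov gf_meas _ close]) (use PP_borel gf_abs in auto)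
  show "(\<Sum>g\<in>Gr. measure G (PP g)) = 1"
    by (rule disc_approx(2)[OF G finite_Gr _ PP_disj PP_cov gf_meas _ close]) (use PP_borel gf_abs in auto)
qed

end

lemma pad_sum:
  fixes c m :: nat and w :: "'g \<Rightarrow> real" and \<phi> :: "'b \<Rightarrow> real" and pt :: "'g \<Rightarrow> 'b"
  assumes h: "bij_betw h {0..<c} F" and cm: "c \<le> m"
  shows "(\<Sum>i<m. (if i < c then w (h i) else 0) * \<phi> (if i < c then pt (h i) else b)) = (\<Sum>g\<in>F. w g * \<phi> (pt g))"
proof -
  let ?f = "\<lambda>i. (if i < c then w (h i) else 0) * \<phi> (if i < c then pt (h i) else b)"
  have "(\<Sum>i<m. ?f i) = (\<Sum>i\<in>{0..<m}. ?f i)" by (simp add: atLeast0LessThan)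
  also have "\<dots> = (\<Sum>i\<in>{0..<c}. ?f i) + (\<Sum>i\<in>{c..<m}. ?f i)"
    by (rule sum.atLeastLessThan_concat[symmetric]) (use cm in auto)
  also have "(\<Sum>i\<in>{c..<m}. ?f i) = 0" by (rule sum.neutral) auto
  also have "(\<Sum>i\<in>{0..<c}. ?f i) = (\<Sum>i\<in>{0..<c}. w (h i) * \<phi> (pt (h i)))" by (rule sum.cong) auto
  also have "\<dots> = (\<Sum>g\<in>F. w g * \<phi> (pt g))" by (rule sum.reindex_bij_betw[OF h])
  finally show ?thesis by simp
qed

lemma floor_part:
  assumes "0 \<le> a" "0 < nu"
  shows "0 \<le> a - nu * real (nat \<lfloor>a / nu\<rfloor>)" "a - nu * real (nat \<lfloor>a / nu\<rfloor>) \<le> nu"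
    "real (nat \<lfloor>a / nu\<rfloor>) \<le> a / nu"
proof -
  have q: "0 \<le> a / nu" using assms by simp
  have f0: "0 \<le> \<lfloor>a / nu\<rfloor>" using q by simp
  have e: "real (nat \<lfloor>a / nu\<rfloor>) = real_of_int \<lfloor>a / nu\<rfloor>" using f0 by simp
  have l: "real_of_int \<lfloor>a / nu\<rfloor> \<le> a / nu" by (rule of_int_floor_le)
  have u: "a / nu < real_of_int \<lfloor>a / nu\<rfloor> + 1" by (rule real_of_int_floor_add_one_gt)
  show "real (nat \<lfloor>a / nu\<rfloor>) \<le> a / nu" using e l by simp
  have "nu * real_of_int \<lfloor>a / nu\<rfloor> \<le> nu * (a / nu)" using l assms(2) by (intro mult_left_mono) auto
  then show "0 \<le> a - nu * real (nat \<lfloor>a / nu\<rfloor>)" using assms(2) e by simp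
  have "nu * (a / nu) < nu * (real_of_int \<lfloor>a / nu\<rfloor> + 1)" using u assms(2) by (intro mult_strict_left_mono) auto
  then show "a - nu * real (nat \<lfloor>a / nu\<rfloor>) \<le> nu" using assms(2) e by (simp add: algebra_simps)
qed

context cfg begin

lemma group_Gr: "(\<Sum>g\<in>Gr. f g) = (\<Sum>j\<in>Cells. \<Sum>g\<in>Cg j. f g)"
  unfolding Cg_def Cells_def by (rule sum.group[symmetric]) (auto simp: finite_Gr)

lemma sum_JJ: "(\<Sum>q\<in>JJ. f q) = (\<Sum>j\<in>Cells. \<Sum>i<mm. f (j, i))"
proof -
  have "(\<Sum>j\<in>Cells. \<Sum>i<mm. f (j, i)) = (\<Sum>(j,i)\<in>Cells\<times>{..<mm}. f (j, i))" by (rule sum.cartesian_product)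
  then show ?thesis by (simp add: JJ_def case_prod_eta)
qed

lemma w1_sum:
  assumes G: "prob_space G" "sets G = sets borel" "emeasure G K = 1"
  shows "(\<Sum>g\<in>Gr. measure G (PP g)) = 1"
  by (rule disc_approx(2)[OF G finite_Gr _ PP_disj PP_cov, of "\<lambda>_. 0" 0 _ 0]) (use PP_borel in auto)

lemma DD_eq: "DD = 2 * nat \<lceil>420 * ln (1 / (\<sigma> * \<eta>))\<rceil> * \<zeta>"
  by (simp add: DD_def kk_def Tt_def)

lemma cell_bound:
  assumes x: "x \<in> S0" and j: "j \<in> Cells"
    and Fs: "Fs \<subseteq> Cg j" "\<forall>g\<in>Fs. 0 \<le> ws g"
    and mom: "\<forall>\<alpha>\<in>II. (\<Sum>g\<in>Fs. ws g * mono \<alpha> (ee g)) = (\<Sum>g\<in>Cg j. measure G (PP g) * mono \<alpha> (ee g))"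
  shows "(\<Sum>g\<in>Fs. ws g) = (\<Sum>g\<in>Cg j. measure G (PP g))"
    and "\<bar>(\<Sum>g\<in>Cg j. measure G (PP g) * gf x y (ee g)) - (\<Sum>g\<in>Fs. ws g * gf x y (ee g))\<bar>
           \<le> 2 * (\<eta> / 8) * (\<Sum>g\<in>Cg j. measure G (PP g))"
proof -
  obtain Pol where Pol: "poly_deg_le DD Pol"
    and PC: "\<forall>\<beta>. \<bar>r x \<beta> - r x (bc j)\<bar> \<le> 2 * \<sigma> * sqrt (2 * ln (3 / (\<sigma> * \<eta>)))
      \<longrightarrow> \<bar>(1/\<sigma>) * std_normal_density ((y - r x \<beta>) / \<sigma>) - Pol \<beta>\<bar> \<le> \<eta> / 8"
    using cell_poly[OF \<sigma> \<eta> s1 poly[rule_format, of x] DD_eq, of "bc j" y] by blast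
  have fFs: "finite Fs" using finite_subset[OF Fs(1) finite_Cg] .
  have close: "\<forall>g\<in>Cg j \<union> Fs. \<bar>gf x y (ee g) - Pol (ee g)\<bar> \<le> \<eta> / 8"
  proof
    fix g assume "g \<in> Cg j \<union> Fs"
    then have g: "g \<in> Cg j" using Fs(1) by auto
    then have gG: "g \<in> Gr" by (simp add: Cg_def)
    have "\<bar>r x (ee g) - r x (bc j)\<bar> \<le> L * norm (ee g - bc j)"
      using lip x ee(1)[OF gG] bc(1)[OF j] by blast
    also have "\<dots> \<le> L * (2 * rho)" using near_bc[OF j g] L by (intro mult_left_mono) auto
    also have "\<dots> = 2 * \<sigma> * sqrt (2 * ln (3 / (\<sigma> * \<eta>)))" using rho_L by simp
    finally have "\<bar>r x (ee g) - r x (bc j)\<bar> \<le> 2 * \<sigma> * sqrt (2 * ln (3 / (\<sigma> * \<eta>)))" .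
    then show "\<bar>gf x y (ee g) - Pol (ee g)\<bar> \<le> \<eta> / 8" using PC by (simp add: gf_def)
  qed
  have wA: "\<forall>g\<in>Cg j. 0 \<le> measure G (PP g)" by simp
  have mom': "\<forall>\<alpha>\<in>Idx DD. (\<Sum>g\<in>Fs. ws g * mono \<alpha> (ee g)) = (\<Sum>g\<in>Cg j. measure G (PP g) * mono \<alpha> (ee g))"
    using mom by (simp add: II_def)
  show "(\<Sum>g\<in>Fs. ws g) = (\<Sum>g\<in>Cg j. measure G (PP g))"
    by (rule cell_err(1)[OF finite_Cg fFs wA Fs(2) mom' Pol close])
  show "\<bar>(\<Sum>g\<in>Cg j. measure G (PP g) * gf x y (ee g)) - (\<Sum>g\<in>Fs. ws g * gf x y (ee g))\<bar>
           \<le> 2 * (\<eta> / 8) * (\<Sum>g\<in>Cg j. measure G (PP g))"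
    by (rule cell_err(2)[OF finite_Cg fFs wA Fs(2) mom' Pol close])
qed

end

context cfg begin

lemma approx:
  assumes G: "prob_space G" "sets G = sets borel" "emeasure G K = 1"
  shows "\<exists>z\<in>ZZ. \<exists>\<kappa>\<in>Kp. \<forall>x\<in>S0. \<forall>y. \<bar>mix_density \<sigma> r G x y - Fz z \<kappa> x y\<bar> \<le> \<eta>"
proof -
  define w1 where "w1 g = measure G (PP g)" for g
  have w1nn: "0 \<le> w1 g" for g by (simp add: w1_def)
  have w1sum: "(\<Sum>g\<in>Gr. w1 g) = 1" unfolding w1_def by (rule w1_sum[OF G])
  define P where "P j F' w' \<longleftrightarrow> F' \<subseteq> Cg j \<and> card F' \<le> card II \<and> (\<forall>g\<in>F'. 0 \<le> w' g) \<and>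
      (\<forall>\<alpha>\<in>II. (\<Sum>g\<in>F'. w' g * mono \<alpha> (ee g)) = (\<Sum>g\<in>Cg j. w1 g * mono \<alpha> (ee g)))"
    for j F' and w' :: "('p \<Rightarrow> int) \<Rightarrow> real"
  have "\<forall>j\<in>Cells. \<exists>pr. P j (fst pr) (snd pr)"
  proof
    fix j
    obtain F' w' where "F' \<subseteq> Cg j" "card F' \<le> card II" "\<forall>g\<in>F'. 0 \<le> w' g"
      "\<forall>\<alpha>\<in>II. (\<Sum>g\<in>F'. w' g * mono \<alpha> (ee g)) = (\<Sum>g\<in>Cg j. w1 g * mono \<alpha> (ee g))"
    proof -
      have "\<forall>g\<in>Cg j. 0 \<le> w1 g" using w1nn by simp
      from cone_reduce[OF finite_II finite_Cg this, of "\<lambda>g \<alpha>. mono \<alpha> (ee g)"]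
      show ?thesis using that by blast
    qed
    then show "\<exists>pr. P j (fst pr) (snd pr)" unfolding P_def by (intro exI[of _ "(F', w')"]) auto
  qed
  then have "\<exists>pf. \<forall>j\<in>Cells. P j (fst (pf j)) (snd (pf j))" by (rule bchoice)
  then obtain pf where pf: "\<forall>j\<in>Cells. P j (fst (pf j)) (snd (pf j))" by blast
  define Fs where "Fs j = fst (pf j)" for j
  define ws where "ws j = snd (pf j)" for j
  have Fs: "\<And>j. j \<in> Cells \<Longrightarrow> Fs j \<subseteq> Cg j" and cFs: "\<And>j. j \<in> Cells \<Longrightarrow> card (Fs j) \<le> mm"
    and wsnn: "\<And>j g. j \<in> Cells \<Longrightarrow> g \<in> Fs j \<Longrightarrow> 0 \<le> ws j g"
    and mom: "\<And>j. j \<in> Cells \<Longrightarrow> \<forall>\<alpha>\<in>II. (\<Sum>g\<in>Fs j. ws j g * mono \<alpha> (ee g)) = (\<Sum>g\<in>Cg j. w1 g * mono \<alpha> (ee g))"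
    using pf unfolding P_def Fs_def ws_def mm_def by auto
  have fFs: "finite (Fs j)" if "j \<in> Cells" for j using finite_subset[OF Fs[OF that] finite_Cg] .
  have "\<forall>j\<in>Cells. \<exists>h. bij_betw h {0..<card (Fs j)} (Fs j)" using fFs ex_bij_betw_nat_finite by blast
  then have "\<exists>en. \<forall>j\<in>Cells. bij_betw (en j) {0..<card (Fs j)} (Fs j)" by (rule bchoice)
  then obtain en where en: "\<And>j. j \<in> Cells \<Longrightarrow> bij_betw (en j) {0..<card (Fs j)} (Fs j)" by blast
  define zz where "zz q = (if snd q < card (Fs (fst q)) then ee (en (fst q) (snd q)) else bc (fst q))" for q
  define lam where "lam q = (if snd q < card (Fs (fst q)) then ws (fst q) (en (fst q) (snd q)) else 0)" for q
  have reidx: "(\<Sum>i<mm. lam (j, i) * \<phi> (zz (j, i))) = (\<Sum>g\<in>Fs j. ws j g * \<phi> (ee g))" if j: "j \<in> Cells" for j \<phi>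
    unfolding lam_def zz_def fst_conv snd_conv by (rule pad_sum[OF en[OF j] cFs[OF j]])
  have lamnn: "0 \<le> lam q" if "q \<in> JJ" for q
  proof -
    obtain j i where q0: "q = (j, i)" by (cases q)
    then have q: "q = (j, i)" "j \<in> Cells" using that by (auto simp: JJ_def)
    show ?thesis
    proof (cases "i < card (Fs j)")
      case True
      then have "en j i \<in> Fs j" using en[OF q(2)] by (auto simp: bij_betw_def)
      then show ?thesis using wsnn[OF q(2)] True by (simp add: lam_def q(1))
    qed (simp add: lam_def q(1))
  qed
  have mass: "(\<Sum>g\<in>Fs j. ws j g) = (\<Sum>g\<in>Cg j. w1 g)" if j: "j \<in> Cells" for j
  proof -
    have "(\<Sum>g\<in>Fs j. ws j g * mono (\<lambda>_. 0) (ee g)) = (\<Sum>g\<in>Cg j. w1 g * mono (\<lambda>_. 0) (ee g))"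
      by (rule bspec[OF mom[OF j]]) (simp add: II_def zero_Idx)
    then show ?thesis by simp
  qed
  have lamsum: "(\<Sum>q\<in>JJ. lam q) = 1"
  proof -
    have "(\<Sum>q\<in>JJ. lam q) = (\<Sum>j\<in>Cells. \<Sum>i<mm. lam (j, i) * (\<lambda>_. 1) (zz (j, i)))" by (simp add: sum_JJ)
    also have "\<dots> = (\<Sum>j\<in>Cells. \<Sum>g\<in>Fs j. ws j g * (\<lambda>_. 1) (ee g))" by (intro sum.cong refl reidx)
    also have "\<dots> = (\<Sum>j\<in>Cells. \<Sum>g\<in>Cg j. w1 g)" by (rule sum.cong[OF refl]) (simp add: mass)
    also have "\<dots> = 1" using w1sum by (simp add: group_Gr)
    finally show ?thesis .
  qed
  define kap where "kap q = (if q \<in> JJ then nat \<lfloor>lam q / nu\<rfloor> else undefined)" for q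
  define z where "z q = (if q \<in> JJ then zz q else undefined)" for q
  have zZ: "z \<in> ZZ"
  proof -
    have "zz q \<in> EE (fst q)" if "q \<in> JJ" for q
    proof -
      obtain j i where q0: "q = (j, i)" by (cases q)
    then have q: "q = (j, i)" "j \<in> Cells" using that by (auto simp: JJ_def)
      show ?thesis
      proof (cases "i < card (Fs j)")
        case True
        then have "en j i \<in> Fs j" using en[OF q(2)] by (auto simp: bij_betw_def)
        then have "en j i \<in> Cg j" using Fs[OF q(2)] by auto
        then show ?thesis using True by (simp add: zz_def q(1) EE_def)
      next
        case False
        obtain g1 where "g1 \<in> Cg j" using Cg_ne[OF q(2)] by blast
        then have "(SOME g. g \<in> Cg j) \<in> Cg j" by (rule someI[where P="\<lambda>g. g \<in> Cg j"])
        then show ?thesis using False by (simp add: zz_def q(1) EE_def bc_def)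
      qed
    qed
    then show ?thesis by (auto simp: ZZ_def z_def PiE_def Pi_def extensional_def)
  qed
  have kapr: "real (kap q) \<le> lam q / nu" "0 \<le> lam q - nu * real (kap q)" "lam q - nu * real (kap q) \<le> nu"
    if "q \<in> JJ" for q
    using floor_part[OF lamnn[OF that] nu_pos] that by (auto simp: kap_def)
  have kapsum: "(\<Sum>q\<in>JJ. kap q) \<le> MM"
  proof -
    have "real (\<Sum>q\<in>JJ. kap q) = (\<Sum>q\<in>JJ. real (kap q))" by simp
    also have "\<dots> \<le> (\<Sum>q\<in>JJ. lam q / nu)" by (rule sum_mono) (rule kapr(1))
    also have "\<dots> = 1 / nu" using lamsum by (simp add: sum_divide_distrib[symmetric])
    finally show ?thesis unfolding MM_def by (rule le_nat_floor)
  qed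
  have kapK: "kap \<in> Kp"
  proof -
    have "kap q \<le> MM" if "q \<in> JJ" for q
      using member_le_sum[of q JJ kap] that finite_JJ kapsum by simp
    then show ?thesis using kapsum by (auto simp: Kp_def kap_def PiE_def Pi_def extensional_def)
  qed
  have main: "\<bar>mix_density \<sigma> r G x y - Fz z kap x y\<bar> \<le> \<eta>" if x: "x \<in> S0" for x y
  proof -
    define F1 where "F1 = (\<Sum>g\<in>Gr. w1 g * gf x y (ee g))"
    define F2 where "F2 = (\<Sum>q\<in>JJ. lam q * gf x y (zz q))"
    have e1: "\<bar>mix_density \<sigma> r G x y - F1\<bar> \<le> \<eta> / 4"
      unfolding F1_def w1_def by (rule step1(1)[OF G x])
    have e2: "\<bar>F1 - F2\<bar> \<le> \<eta> / 4"
    proof -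
      have eqX: "F1 - F2 = (\<Sum>j\<in>Cells. (\<Sum>g\<in>Cg j. w1 g * gf x y (ee g)) - (\<Sum>g\<in>Fs j. ws j g * gf x y (ee g)))"
      proof -
        have "F2 = (\<Sum>j\<in>Cells. \<Sum>i<mm. lam (j, i) * gf x y (zz (j, i)))" by (simp add: F2_def sum_JJ)
        also have "\<dots> = (\<Sum>j\<in>Cells. \<Sum>g\<in>Fs j. ws j g * gf x y (ee g))" by (intro sum.cong refl reidx)
        finally have f2: "F2 = (\<Sum>j\<in>Cells. \<Sum>g\<in>Fs j. ws j g * gf x y (ee g))" .
        have f1: "F1 = (\<Sum>j\<in>Cells. \<Sum>g\<in>Cg j. w1 g * gf x y (ee g))" unfolding F1_def by (rule group_Gr)
        show ?thesis unfolding f1 f2 by (rule sum_subtractf[symmetric])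
      qed
      have "\<bar>\<Sum>j\<in>Cells. (\<Sum>g\<in>Cg j. w1 g * gf x y (ee g)) - (\<Sum>g\<in>Fs j. ws j g * gf x y (ee g))\<bar> \<le> (\<Sum>j\<in>Cells. \<bar>(\<Sum>g\<in>Cg j. w1 g * gf x y (ee g)) - (\<Sum>g\<in>Fs j. ws j g * gf x y (ee g))\<bar>)"
        by (rule sum_abs)
      also have "\<dots> \<le> (\<Sum>j\<in>Cells. 2 * (\<eta> / 8) * (\<Sum>g\<in>Cg j. w1 g))"
      proof (rule sum_mono)
        fix j assume j: "j \<in> Cells"
        show "\<bar>(\<Sum>g\<in>Cg j. w1 g * gf x y (ee g)) - (\<Sum>g\<in>Fs j. ws j g * gf x y (ee g))\<bar> \<le> 2 * (\<eta> / 8) * (\<Sum>g\<in>Cg j. w1 g)"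
          unfolding w1_def by (rule cell_bound(2)[OF x j Fs[OF j] _ mom[OF j, unfolded w1_def]]) (use wsnn[OF j] in auto)
      qed
      also have "\<dots> = 2 * (\<eta> / 8) * (\<Sum>g\<in>Gr. w1 g)" unfolding group_Gr[of w1] by (rule sum_distrib_left[symmetric])
      also have "\<dots> = \<eta> / 4" using w1sum by simp
      finally show ?thesis unfolding eqX .
    qed
    have e3: "\<bar>F2 - Fz z kap x y\<bar> \<le> \<eta> / 4"
    proof -
      have "Fz z kap x y = (\<Sum>q\<in>JJ. nu * real (kap q) * gf x y (zz q))"
        unfolding Fz_def by (intro sum.cong refl) (simp add: z_def)
      then have eqY: "F2 - Fz z kap x y = (\<Sum>q\<in>JJ. (lam q - nu * real (kap q)) * gf x y (zz q))"
        by (simp add: F2_def sum_subtractf left_diff_distrib)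
      have "\<bar>\<Sum>q\<in>JJ. (lam q - nu * real (kap q)) * gf x y (zz q)\<bar> \<le> (\<Sum>q\<in>JJ. \<bar>(lam q - nu * real (kap q)) * gf x y (zz q)\<bar>)" by (rule sum_abs)
      also have "\<dots> \<le> (\<Sum>q\<in>JJ. nu * (1 / \<sigma>))"
      proof (rule sum_mono)
        fix q assume q: "q \<in> JJ"
        have "\<bar>(lam q - nu * real (kap q)) * gf x y (zz q)\<bar> = (lam q - nu * real (kap q)) * \<bar>gf x y (zz q)\<bar>"
          using kapr(2)[OF q] by (simp add: abs_mult)
        also have "\<dots> \<le> nu * (1 / \<sigma>)" using kapr(2,3)[OF q] gf_abs nu_pos by (intro mult_mono) auto
        finally show "\<bar>(lam q - nu * real (kap q)) * gf x y (zz q)\<bar> \<le> nu * (1 / \<sigma>)" .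
      qed
      also have "\<dots> = real NN * nu / \<sigma>" by (simp add: NN_def)
      also have "\<dots> = \<eta> / 4" using NN_pos \<sigma> by (simp add: nu_def)
      finally show ?thesis unfolding eqY .
    qed
    have "\<bar>mix_density \<sigma> r G x y - Fz z kap x y\<bar> \<le> \<bar>mix_density \<sigma> r G x y - F1\<bar> + \<bar>F1 - F2\<bar> + \<bar>F2 - Fz z kap x y\<bar>"
      by linarith
    also have "\<dots> \<le> \<eta> / 4 + \<eta> / 4 + \<eta> / 4" using e1 e2 e3 by linarith
    also have "\<dots> \<le> \<eta>" using \<eta> by simp
    finally show ?thesis .
  qed
  show ?thesis using zZ kapK main by blast
qed

end

context cfg begin

definition "Fam = (\<lambda>(z, \<kappa>). Fz z \<kappa>) ` (ZZ \<times> Kp)"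

lemma finite_ZZ: "finite ZZ"
  unfolding ZZ_def by (intro finite_PiE finite_JJ) (auto simp: EE_def finite_Cg)

lemma finite_Kp: "finite Kp"
  unfolding Kp_def by (rule finite_subset[of _ "Pi\<^sub>E JJ (\<lambda>_. {..MM})"]) (auto intro: finite_PiE finite_JJ)

lemma finite_Fam: "finite Fam" unfolding Fam_def using finite_ZZ finite_Kp by simp

lemma ZZ_ne: "ZZ \<noteq> {}"
proof -
  have "\<forall>q\<in>JJ. EE (fst q) \<noteq> {}" using EE_ne by (auto simp: JJ_def)
  then show ?thesis unfolding ZZ_def by (simp add: PiE_eq_empty_iff)
qed

lemma Kp_ne: "Kp \<noteq> {}"
proof -
  have "(\<lambda>q. if q \<in> JJ then 0 else undefined) \<in> Kp" by (auto simp: Kp_def PiE_def extensional_def)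
  then show ?thesis by blast
qed

lemma card_Fam: "card Fam \<le> card ZZ * card Kp"
proof -
  have "card Fam \<le> card (ZZ \<times> Kp)" unfolding Fam_def by (rule card_image_le) (simp add: finite_ZZ finite_Kp)
  then show ?thesis by (simp add: card_cartesian_product)
qed

definition "Qb = 2 * rho / dd + 2"

lemma Qb_ge: "1 \<le> Qb" using rho_pos dd_pos by (simp add: Qb_def)

lemma card_ZZ: "real (card ZZ) \<le> (Qb ^ CARD('p)) ^ NN"
proof -
  have "card ZZ = (\<Prod>q\<in>JJ. card (EE (fst q)))" unfolding ZZ_def by (rule card_PiE[OF finite_JJ])
  then have "real (card ZZ) = (\<Prod>q\<in>JJ. real (card (EE (fst q))))" by simp
  also have "\<dots> \<le> (\<Prod>q\<in>JJ. Qb ^ CARD('p))"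
  proof (rule prod_mono)
    fix q assume q: "q \<in> JJ"
    then have j: "fst q \<in> Cells" by (auto simp: JJ_def)
    have "real (card (EE (fst q))) \<le> real (card (Cg (fst q)))" using card_EE by simp
    also have "\<dots> \<le> Qb ^ CARD('p)" unfolding Qb_def by (rule card_Cg[OF j])
    finally show "0 \<le> real (card (EE (fst q))) \<and> real (card (EE (fst q))) \<le> Qb ^ CARD('p)" by simp
  qed
  also have "\<dots> = (Qb ^ CARD('p)) ^ NN" by (simp add: NN_def)
  finally show ?thesis .
qed

lemma ln_ZZ: "ln (real (card ZZ)) \<le> real NN * real CARD('p) * ln Qb"
proof -
  have pos: "0 < real (card ZZ)" using ZZ_ne finite_ZZ by (simp add: card_gt_0_iff)
  have "ln (real (card ZZ)) \<le> ln ((Qb ^ CARD('p)) ^ NN)" using card_ZZ pos by (subst ln_le_cancel_iff) auto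
  also have "\<dots> = real NN * (real CARD('p) * ln Qb)" using Qb_ge by (simp add: ln_realpow)
  finally show ?thesis by (simp add: mult.assoc)
qed

lemma ln_Kp: "ln (real (card Kp)) \<le> real NN * (1 + ln (1 + real MM / real NN))"
  unfolding Kp_def by (rule count_weights[OF finite_JJ NN_def[symmetric] NN_pos])

lemma sqrt_le: "sqrt (2 * ln (3 / (\<sigma> * \<eta>))) \<le> 3 * Tt"
proof -
  have ln3: "ln (3::real) \<le> 2" using ln_le_minus_one[of 3] by simp
  have "2 * ln (3 / (\<sigma> * \<eta>)) \<le> (3 * Tt)\<^sup>2"
    using ln3 Tt(1) by (simp add: cfg.ln3[OF cfg_axioms] power2_eq_square) (smt (verit) mult_le_cancel_left1 mult_mono)
  then show ?thesis using Tt(1) by (metis real_le_lsqrt[of "3 * Tt"] less_imp_le mult_nonneg_nonneg zero_le_numeral zero_le_one order.trans)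
qed

end

context cfg begin

lemma expTt: "1 / (\<sigma> * \<eta>) = exp Tt"
proof -
  have "exp Tt * exp (- Tt) = 1" by (simp add: exp_minus)
  then have "exp Tt * (\<sigma> * \<eta>) = 1" by (simp only: Tt(2))
  then have "exp Tt = 1 / (\<sigma> * \<eta>)" using \<sigma> \<eta> by (simp add: eq_divide_eq)
  then show ?thesis by simp
qed

lemma ln_Qb: "ln Qb \<le> (ln (26 * real CARD('p)) + 2) * Tt"
proof -
  define p where "p = real CARD('p)"
  define sq where "sq = sqrt (2 * ln (3 / (\<sigma> * \<eta>)))"
  have p1: "1 \<le> p" by (simp add: p_def)
  have sq0: "0 \<le> sq" using ln3_pos by (simp add: sq_def)
  have sq3: "sq \<le> 3 * Tt" unfolding sq_def by (rule sqrt_le)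
  have T1: "1 \<le> Tt" using Tt(1) by simp
  have eT: "Tt \<le> exp Tt" using exp_ge_add_one_self[of Tt] by linarith
  have eT0: "0 < exp Tt" by simp
  have "rho / delta = 4 * sq / (\<sigma> * \<eta>)"
    using \<sigma> \<eta> L by (simp add: rho_def delta_def sq_def field_simps power2_eq_square)
  also have "\<dots> = 4 * sq * (1 / (\<sigma> * \<eta>))" by simp
  also have "\<dots> = 4 * sq * exp Tt" by (simp only: expTt)
  finally have rd: "rho / delta = 4 * sq * exp Tt" .
  have "Qb = 2 * p * (rho / delta) + 2" using delta_pos p1 by (simp add: Qb_def dd_def p_def field_simps)
  also have "\<dots> = 8 * p * sq * exp Tt + 2" by (simp add: rd)
  also have "\<dots> \<le> 8 * p * (3 * Tt) * exp Tt + 2" using sq3 p1 eT0 by (intro add_right_mono mult_right_mono mult_left_mono) auto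
  also have "\<dots> \<le> 26 * p * Tt * exp Tt"
  proof -
    have e1: "1 \<le> exp Tt" using T1 by simp
    have "1 * 1 \<le> p * Tt" using p1 T1 by (intro mult_mono) auto
    then have "1 * 1 \<le> (p * Tt) * exp Tt" using e1 by (intro mult_mono) auto
    then have "1 \<le> p * Tt * exp Tt" by simp
    then show ?thesis by simp
  qed
  also have "\<dots> \<le> 26 * p * exp Tt * exp Tt" using eT p1 eT0 by (intro mult_left_mono mult_right_mono) auto
  finally have Qle: "Qb \<le> 26 * p * (exp Tt * exp Tt)" by (simp add: mult.assoc)
  have "ln Qb \<le> ln (26 * p * (exp Tt * exp Tt))" using Qle Qb_ge by (subst ln_le_cancel_iff) auto
  also have "\<dots> = ln (26 * p) + 2 * Tt" using p1 by (simp add: ln_mult)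
  also have "\<dots> \<le> (ln (26 * p) + 2) * Tt"
  proof -
    have "0 \<le> ln (26 * p)" using p1 by simp
    then have "ln (26 * p) \<le> ln (26 * p) * Tt" using T1 by (simp add: mult_le_cancel_left1)
    then show ?thesis by (simp add: distrib_right)
  qed
  finally show ?thesis by (simp add: p_def)
qed

lemma ln_w: "1 + ln (1 + real MM / real NN) \<le> 6 * Tt"
proof -
  have N0: "0 < real NN" using NN_pos by simp
  have "real MM \<le> 1 / nu" unfolding MM_def using nu_pos by simp
  also have "1 / nu = 4 * real NN / (\<sigma> * \<eta>)" by (simp add: nu_def)
  finally have "real MM / real NN \<le> 4 / (\<sigma> * \<eta>)" using N0 by (simp add: divide_le_eq field_simps)
  also have "\<dots> = 4 * (1 / (\<sigma> * \<eta>))" by simp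
  also have "\<dots> = 4 * exp Tt" by (simp only: expTt)
  finally have m: "real MM / real NN \<le> 4 * exp Tt" .
  have e1: "1 \<le> exp Tt" using Tt(1) by simp
  have le5: "1 + real MM / real NN \<le> 5 * exp Tt" using m e1 by linarith
  have pos: "0 < 1 + real MM / real NN" using N0 by (simp add: add_pos_nonneg)
  have "ln (1 + real MM / real NN) \<le> ln (5 * exp Tt)" using le5 pos by (subst ln_le_cancel_iff) auto
  also have "ln (5 * exp Tt) = ln 5 + Tt" by (simp add: ln_mult)
  also have "ln (5::real) \<le> 4" using ln_le_minus_one[of 5] by simp
  finally show ?thesis using Tt(1) by simp
qed

lemma NN_le: "real NN \<le> real (card S) * (843 * real \<zeta> * Tt) ^ CARD('p)"
proof -
  have T1: "1 \<le> Tt" using Tt(1) by simp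
  have z1: "1 \<le> real \<zeta>" using \<zeta> by simp
  have "real kk \<le> 420 * Tt + 1" unfolding kk_def using T1 by linarith
  also have "\<dots> \<le> 421 * Tt" using T1 by simp
  finally have kk: "real kk \<le> 421 * Tt" .
  have "real (DD + 1) = 2 * real kk * real \<zeta> + 1" by (simp add: DD_def)
  also have "\<dots> \<le> 2 * (421 * Tt) * real \<zeta> + 1" using kk z1 by (intro add_right_mono mult_right_mono) auto
  also have "\<dots> \<le> 843 * real \<zeta> * Tt"
  proof -
    have "1 * 1 \<le> real \<zeta> * Tt" using z1 T1 by (intro mult_mono) auto
    then show ?thesis by simp
  qed
  finally have D1: "real (DD + 1) \<le> 843 * real \<zeta> * Tt" .
  have "real mm \<le> real ((DD + 1) ^ CARD('p))" using mm_le by (simp only: of_nat_le_iff)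
  also have "\<dots> = real (DD + 1) ^ CARD('p)" by (rule of_nat_power)
  also have "\<dots> \<le> (843 * real \<zeta> * Tt) ^ CARD('p)" using D1 by (intro power_mono) auto
  finally have mmb: "real mm \<le> (843 * real \<zeta> * Tt) ^ CARD('p)" .
  have "real NN = real (card Cells) * real mm" by (simp add: NN_eq)
  also have "\<dots> \<le> real (card S) * (843 * real \<zeta> * Tt) ^ CARD('p)"
    using card_Cells mmb by (intro mult_mono) auto
  finally show ?thesis .
qed

lemma ln_Fam: "ln (real (card Fam)) \<le> ((real CARD('p) * (ln (26 * real CARD('p)) + 2) + 6) * 843 ^ CARD('p))
     * real \<zeta> ^ CARD('p) * real (card S) * Tt ^ (CARD('p) + 1)"
proof -
  define c0 where "c0 = real CARD('p) * (ln (26 * real CARD('p)) + 2) + 6"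
  have p1: "1 \<le> real CARD('p)" by simp
  then have "1 \<le> 26 * real CARD('p)" by linarith
  then have l0: "0 \<le> ln (26 * real CARD('p))" by simp
  have "0 \<le> real CARD('p) * (ln (26 * real CARD('p)) + 2)" using p1 l0 by (intro mult_nonneg_nonneg) auto
  then have c00: "0 \<le> c0" unfolding c0_def by linarith
  have T0: "0 \<le> Tt" using Tt(1) by simp
  have pZ: "0 < real (card ZZ)" using ZZ_ne finite_ZZ by (simp add: card_gt_0_iff)
  have pK: "0 < real (card Kp)" using Kp_ne finite_Kp by (simp add: card_gt_0_iff)
  have lnF: "ln (real (card Fam)) \<le> ln (real (card ZZ)) + ln (real (card Kp))"
  proof (cases "card Fam = 0")
    case True
    have "0 \<le> ln (real (card ZZ))" "0 \<le> ln (real (card Kp))" using pZ pK by simp_all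
    then show ?thesis using True by simp
  next
    case False
    have "ln (real (card Fam)) \<le> ln (real (card ZZ) * real (card Kp))"
    proof -
      have "card ZZ > 0" "card Kp > 0" using ZZ_ne finite_ZZ Kp_ne finite_Kp by (simp_all add: card_gt_0_iff)
      then show ?thesis using card_Fam False by (subst ln_le_cancel_iff) (auto simp flip: of_nat_mult)
    qed
    also have "\<dots> = ln (real (card ZZ)) + ln (real (card Kp))" using pZ pK by (simp add: ln_mult)
    finally show ?thesis .
  qed
  have "ln (real (card ZZ)) \<le> real NN * real CARD('p) * ((ln (26 * real CARD('p)) + 2) * Tt)"
  proof -
    have "real NN * real CARD('p) * ln Qb \<le> real NN * real CARD('p) * ((ln (26 * real CARD('p)) + 2) * Tt)"
      using ln_Qb by (intro mult_left_mono) auto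
    then show ?thesis using ln_ZZ by linarith
  qed
  moreover have "ln (real (card Kp)) \<le> real NN * (6 * Tt)"
  proof -
    have "real NN * (1 + ln (1 + real MM / real NN)) \<le> real NN * (6 * Tt)"
      using ln_w by (intro mult_left_mono) auto
    then show ?thesis using ln_Kp by linarith
  qed
  ultimately have "ln (real (card Fam)) \<le> real NN * Tt * c0" using lnF by (simp add: c0_def algebra_simps)
  also have "\<dots> \<le> (real (card S) * (843 * real \<zeta> * Tt) ^ CARD('p)) * Tt * c0"
    using NN_le T0 c00 by (intro mult_right_mono) auto
  also have "\<dots> = (c0 * 843 ^ CARD('p)) * real \<zeta> ^ CARD('p) * real (card S) * Tt ^ (CARD('p) + 1)"
    by (simp add: power_mult_distrib algebra_simps)
  finally show ?thesis by (simp add: c0_def)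
qed

end

lemma exists_min_cover:
  fixes K :: "(real^'p::finite) set"
  assumes K: "compact K" and \<rho>: "0 < \<rho>"
  shows "\<exists>S. finite S \<and> (\<forall>t\<in>K. \<exists>s\<in>S. dist s t \<le> \<rho>) \<and>
     covering_number (\<lambda>a b. ereal (dist a b)) \<rho> K = ereal (real (card S))"
proof -
  define Good where "Good = {S. finite S \<and> (\<forall>t\<in>K. \<exists>s\<in>S. ereal (dist s t) \<le> ereal \<rho>)}"
  have "K \<subseteq> (\<Union>t\<in>K. ball t \<rho>)" using \<rho> by auto
  then obtain C' where C': "C' \<subseteq> K" "finite C'" "K \<subseteq> (\<Union>t\<in>C'. ball t \<rho>)"
    using compactE_image[OF K, of K "\<lambda>t. ball t \<rho>"] by blast
  have "C' \<in> Good" using C' unfolding Good_def by (force simp: less_imp_le)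
  then have ex: "\<exists>n. \<exists>S\<in>Good. card S = n" by blast
  define n0 where "n0 = (LEAST n. \<exists>S\<in>Good. card S = n)"
  obtain S where S: "S \<in> Good" "card S = n0" using LeastI_ex[OF ex] unfolding n0_def by blast
  have min: "n0 \<le> card S'" if "S' \<in> Good" for S' unfolding n0_def using that by (intro Least_le) blast
  have "covering_number (\<lambda>a b. ereal (dist a b)) \<rho> K = (INF S'\<in>Good. ereal (real (card S')))"
    by (simp add: covering_number_def Good_def)
  also have "\<dots> = ereal (real n0)"
  proof (rule antisym)
    show "(INF S'\<in>Good. ereal (real (card S'))) \<le> ereal (real n0)"
      using S by (metis INF_lower)
    show "ereal (real n0) \<le> (INF S'\<in>Good. ereal (real (card S')))"
      by (rule INF_greatest) (use min in simp)
  qed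
  finally show ?thesis using S unfolding Good_def by auto
qed

context cfg begin

lemma Fam_cover: assumes "f \<in> mixture_class \<sigma> r K" shows "\<exists>s\<in>Fam. sup_dist S0 s f \<le> ereal \<eta>"
proof -
  obtain G where G: "f = mix_density \<sigma> r G" "prob_space G" "sets G = sets borel" "emeasure G K = 1"
    using assms by (auto simp: mixture_class_def)
  obtain z \<kappa> where z: "z \<in> ZZ" "\<kappa> \<in> Kp" and b: "\<forall>x\<in>S0. \<forall>y. \<bar>mix_density \<sigma> r G x y - Fz z \<kappa> x y\<bar> \<le> \<eta>"
    using approx[OF G(2-4)] by blast
  have "Fz z \<kappa> \<in> Fam" using z unfolding Fam_def by force
  moreover have "sup_dist S0 (Fz z \<kappa>) f \<le> ereal \<eta>"
    unfolding sup_dist_def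
  proof (rule SUP_least)
    fix xy assume "xy \<in> S0 \<times> (UNIV :: real set)"
    then have "\<bar>mix_density \<sigma> r G (fst xy) (snd xy) - Fz z \<kappa> (fst xy) (snd xy)\<bar> \<le> \<eta>" using b by auto
    then show "ereal \<bar>Fz z \<kappa> (fst xy) (snd xy) - f (fst xy) (snd xy)\<bar> \<le> ereal \<eta>"
      using G(1) by (simp add: abs_minus_commute)
  qed
  ultimately show ?thesis by blast
qed

lemma cov_Fam: "covering_number (sup_dist S0) \<eta> (mixture_class \<sigma> r K) \<le> ereal (real (card Fam))"
  unfolding covering_number_def by (rule INF_lower) (use finite_Fam Fam_cover in auto)

lemma cov_nonneg: "0 \<le> covering_number (sup_dist S0) \<eta> (mixture_class \<sigma> r K)"
  unfolding covering_number_def by (rule INF_greatest) simp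

end

theorem theorem6p3:
  "\<exists>C::real. \<forall>(K :: (real^'p) set) (S0 :: 'x set) (\<sigma>::real) (r :: 'x \<Rightarrow> real^'p \<Rightarrow> real) (\<zeta>::nat) (\<eta>::real).
     compact K \<and> \<sigma> > 0 \<and> \<zeta> \<ge> 1 \<and> (\<forall>x. poly_deg_le \<zeta> (r x)) \<and>
     0 < (SUP x \<in> S0. lip_const r K x) \<and> (SUP x \<in> S0. lip_const r K x) < \<infinity> \<and>
     0 < \<eta> \<and> \<eta> < exp (-1) / \<sigma>
     \<longrightarrow> covering_number (sup_dist S0) \<eta> (mixture_class \<sigma> r K) < \<infinity> \<and>
         ln (real_of_ereal (covering_number (sup_dist S0) \<eta> (mixture_class \<sigma> r K)))
         \<le> C * real \<zeta> ^ CARD('p)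
             * real_of_ereal (covering_number (\<lambda>a b. ereal (dist a b))
                 (\<sigma> / real_of_ereal (SUP x \<in> S0. lip_const r K x) * sqrt (2 * ln (3 / (\<sigma> * \<eta>)))) K)
             * (ln (1 / (\<sigma> * \<eta>))) ^ (CARD('p) + 1)"
proof -
  define C where "C = (real CARD('p) * (ln (26 * real CARD('p)) + 2) + 6) * 843 ^ CARD('p)"
  show ?thesis
  proof (intro exI[of _ C] allI impI)
    fix K :: "(real^'p) set" and S0 :: "'x set" and \<sigma> :: real and r :: "'x \<Rightarrow> real^'p \<Rightarrow> real"
      and \<zeta> :: nat and \<eta> :: real
    assume H: "compact K \<and> \<sigma> > 0 \<and> \<zeta> \<ge> 1 \<and> (\<forall>x. poly_deg_le \<zeta> (r x)) \<and>
     0 < (SUP x \<in> S0. lip_const r K x) \<and> (SUP x \<in> S0. lip_const r K x) < \<infinity> \<and>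
     0 < \<eta> \<and> \<eta> < exp (-1) / \<sigma>"
    define Ls where "Ls = (SUP x \<in> S0. lip_const r K x)"
    have K: "compact K" and \<sigma>: "0 < \<sigma>" and \<zeta>: "1 \<le> \<zeta>" and poly: "\<forall>x. poly_deg_le \<zeta> (r x)"
      and Ls0: "0 < Ls" and Ls1: "Ls < \<infinity>" and \<eta>: "0 < \<eta>" and \<eta>1: "\<eta> < exp (-1) / \<sigma>"
      using H by (auto simp: Ls_def)
    define L where "L = real_of_ereal Ls"
    have LsL: "Ls = ereal L" using Ls0 Ls1 unfolding L_def by (cases Ls) auto
    have L0: "0 < L" using Ls0 LsL by simp
    have s1: "\<sigma> * \<eta> < exp (-1)" using \<eta>1 \<sigma> by (simp add: less_divide_eq mult.commute)
    have Kne: "K \<noteq> {}"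
    proof
      assume "K = {}"
      then have l: "lip_const r K x \<le> -\<infinity>" for x unfolding lip_const_def by (intro SUP_least) auto
      have "Ls \<le> -\<infinity>" unfolding Ls_def by (rule SUP_least) (rule l)
      then show False using Ls0 by simp
    qed
    have lip: "\<forall>x\<in>S0. \<forall>b1\<in>K. \<forall>b2\<in>K. \<bar>r x b1 - r x b2\<bar> \<le> L * norm (b1 - b2)"
    proof (intro ballI)
      fix x b1 b2 assume x: "x \<in> S0" and b: "b1 \<in> K" "b2 \<in> K"
      show "\<bar>r x b1 - r x b2\<bar> \<le> L * norm (b1 - b2)"
      proof (cases "b1 = b2")
        case True then show ?thesis by simp
      next
        case False
        have "ereal (\<bar>r x b1 - r x b2\<bar> / norm (b1 - b2)) \<le> lip_const r K x"
          unfolding lip_const_def using SUP_upper[of "(b1,b2)" "{(b1, b2). b1 \<in> K \<and> b2 \<in> K \<and> b1 \<noteq> b2}"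
            "\<lambda>b. ereal (\<bar>r x (fst b) - r x (snd b)\<bar> / norm (fst b - snd b))"] b False by simp
        also have "\<dots> \<le> Ls" unfolding Ls_def using x by (rule SUP_upper)
        finally have "\<bar>r x b1 - r x b2\<bar> / norm (b1 - b2) \<le> L" using LsL by simp
        moreover have "0 < norm (b1 - b2)" using False by simp
        ultimately show ?thesis by (simp add: divide_le_eq mult.commute)
      qed
    qed
    define \<rho> where "\<rho> = \<sigma> / L * sqrt (2 * ln (3 / (\<sigma> * \<eta>)))"
    have \<rho>0: "0 < \<rho>"
    proof -
      have "exp (-1::real) \<le> 1" by simp
      then have "\<sigma> * \<eta> < 1" using s1 by linarith
      then have "1 < 3 / (\<sigma> * \<eta>)" using \<sigma> \<eta> by (simp add: less_divide_eq)
      then have "0 < ln (3 / (\<sigma> * \<eta>))" by (rule ln_gt_zero)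
      then show ?thesis using \<sigma> L0 by (simp add: \<rho>_def)
    qed
    obtain S where S: "finite S" "\<forall>t\<in>K. \<exists>s\<in>S. dist s t \<le> \<rho>"
      and cS: "covering_number (\<lambda>a b. ereal (dist a b)) \<rho> K = ereal (real (card S))"
      using exists_min_cover[OF K \<rho>0] by blast
    interpret cfg K S0 \<sigma> \<eta> L r \<zeta> S
      by unfold_locales (use K Kne \<sigma> \<eta> s1 L0 poly \<zeta> lip S in \<open>auto simp: \<rho>_def\<close>)
    define cn where "cn = covering_number (sup_dist S0) \<eta> (mixture_class \<sigma> r K)"
    have cn1: "cn \<le> ereal (real (card Fam))" unfolding cn_def by (rule cov_Fam)
    have cn0: "0 \<le> cn" unfolding cn_def by (rule cov_nonneg)
    have "ereal (real (card Fam)) < \<infinity>" by simp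
    with cn1 have fin: "cn < \<infinity>" by (rule le_less_trans)
    obtain c where cnc: "cn = ereal c" using fin cn0 by (cases cn) auto
    have rcn: "real_of_ereal cn \<le> real (card Fam)" using cn1 by (simp add: cnc)
    have rhs0: "0 \<le> C * real \<zeta> ^ CARD('p) * real (card S) * Tt ^ (CARD('p) + 1)"
    proof -
      have p1: "1 \<le> real CARD('p)" by simp
      then have "1 \<le> 26 * real CARD('p)" by linarith
      then have l0: "0 \<le> ln (26 * real CARD('p))" by simp
      have "0 \<le> C" unfolding C_def using p1 l0 by simp
      moreover have "0 \<le> Tt" using Tt(1) by simp
      ultimately show ?thesis by simp
    qed
    have lnb: "ln (real_of_ereal cn) \<le> C * real \<zeta> ^ CARD('p) * real (card S) * Tt ^ (CARD('p) + 1)"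
    proof (cases "real_of_ereal cn > 0")
      case True
      then have "ln (real_of_ereal cn) \<le> ln (real (card Fam))" using rcn by (subst ln_le_cancel_iff) auto
      also have "\<dots> \<le> C * real \<zeta> ^ CARD('p) * real (card S) * Tt ^ (CARD('p) + 1)"
        using ln_Fam by (simp add: C_def)
      finally show ?thesis .
    next
      case False
      then have "real_of_ereal cn = 0" using cnc cn0 by simp
      then have "ln (real_of_ereal cn) \<le> 0" by simp
      then show ?thesis using rhs0 by linarith
    qed
    have rL: "real_of_ereal (SUP x \<in> S0. lip_const r K x) = L" by (simp add: L_def Ls_def)
    show "covering_number (sup_dist S0) \<eta> (mixture_class \<sigma> r K) < \<infinity> \<and>
         ln (real_of_ereal (covering_number (sup_dist S0) \<eta> (mixture_class \<sigma> r K)))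
         \<le> C * real \<zeta> ^ CARD('p)
             * real_of_ereal (covering_number (\<lambda>a b. ereal (dist a b))
                 (\<sigma> / real_of_ereal (SUP x \<in> S0. lip_const r K x) * sqrt (2 * ln (3 / (\<sigma> * \<eta>)))) K)
             * (ln (1 / (\<sigma> * \<eta>))) ^ (CARD('p) + 1)"
      using fin lnb unfolding rL \<rho>_def[symmetric] cS cn_def Tt_def by simp
  qed
qed

end
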